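(* Assume $\epsilon=0$ and the following hold: (A1) for every $z\in\mathcal{Z}$ the map $x\mapsto l(x,z)$ is $\gamma$-strongly convex on $\mathbb{R}^n$ for some $\gamma>0$; (A2) for every $x$, $\|\nabla_x l(x,z)-\nabla_x l(x,z')\|\le\beta_z\|z-z'\|$ for all $z,z'\in\mathcal{Z}$, and for every $z\in\mathcal{Z}$, $\|\nabla_x l(x,z)-\nabla_x l(y,z)\|\le\beta_x\|x-y\|$ for all $x,y$; (A3) $W_1(\mathcal{D}(x),\mathcal{D}(y))\le\epsilon\|x-y\|$ and $W_1(\mathcal{D}_g(x),\mathcal{D}_g(y))\le\epsilon_g\|x-y\|$ for all $x,y$; (A4) $G$ has full row rank. Let $\{(x_t,\lambda_t)\}$ be the sequence generated by Repeated Dual Ascent with step size $\eta>0$. If $$\epsilon_g\Big(1+\frac{\|G\|_2^2}{\gamma^2}\Big)<2\gamma_d \quad\text{and}\quad \eta<\frac{2\gamma_d-\epsilon_g\big(1+\frac{\|G\|_2^2}{\gamma^2}\big)}{L_d^2+\epsilon_gL_d+\epsilon_g^2\frac{\|G\|_2^2}{\gamma^2}+\epsilon_g^2L_d\frac{\|G\|_2^2}{\gamma^2}},$$ then for all $t\ge1$ $$\|\lambda_{t+1}-\lambda_s^*\|^2\le\kappa_3^t\|\lambda_1-\lambda_s^*\|^2 \quad\text{and}\quad \|x_{t+1}-x_s\|^2\le\kappa_3^{t-1}\frac{\|G\|_2^2}{\gamma^2}\|\lambda_1-\lambda_s^*\|^2,$$ where $\kappa_3=1-2\eta\gamma_d+\eta^2L_d^2+\epsilon_g\eta+\epsilon_gL_d\eta^2+\frac{\|G\|_2^2}{\gamma^2}\big(\epsilon_g^2\eta^2+\epsilon_g\eta+\epsilon_gL_d\eta^2\big)$,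 $x_s$ is the constrained equilibrium point, and $\lambda_s^*$ is the optimal dual variable, i.e. the maximizer over $\lambda\ge0$ of $d_{x_s}(\lambda)$.
   Context: Let $G\in\mathbb{R}^{d_w\times n}$ and let $l:\mathbb{R}^n\times\mathbb{R}^{d_z}\to\mathbb{R}$ be twice continuously differentiable. Let $\mathcal{Z}\subseteq\mathbb{R}^{d_z}$, $\mathcal{W}\subseteq\mathbb{R}^{d_w}$, and let $\mathcal{D},\mathcal{D}_g$ be maps assigning to each $x\in\mathbb{R}^n$ probability distributions $\mathcal{D}(x)$ on $\mathcal{Z}$ and $\mathcal{D}_g(x)$ on $\mathcal{W}$ (with measurability so that all expectations are well defined). For $x,x'\in\mathbb{R}^n$ put $f_{x'}(x)=\mathbb{E}_{z\sim\mathcal{D}(x')}[l(x,z)]$ and $\xi(x')=\mathbb{E}_{w\sim\mathcal{D}_g(x')}[w]\in\mathbb{R}^{d_w}$; vector inequalities are componentwise. A constrained equilibrium point is a vector $x_s$ with $x_s=\arg\min_x\{f_{x_s}(x): Gx\le\xi(x_s)\}$. Define the Lagrangian $L_{x'}(x,\lambda)=f_{x'}(x)+\lambda^{\mathrm T}(Gx-\xi(x'))$ and the dual function $d_{x'}(\lambda)=\min_x L_{x'}(x,\lambda)$. Repeated Dual Ascent (RDA): given initial $\lambda_1\in\mathbb{R}^{d_w}$, $x_0\in\mathbb{R}^n$ and step size $\eta>0$, for $t=1,2,\dots$ set $x_t=\arg\min_x L_{x_{t-1}}(x,\lambda_t)$, $\bar y_t=\arg\min_x L_{x_t}(x,\lambda_t)$,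 and $\lambda_{t+1}=[\lambda_t+\eta(G\bar y_t-\xi(x_t))]_+$, where $[a]_+=\max\{a,0\}$ componentwise. Set $\gamma_d=\lambda_{\min}(GG^{\mathrm T})/\beta_x$ and $L_d=\|G\|_2^2/\gamma$. $W_1$ is the 1-Wasserstein distance, $\|\cdot\|$ the Euclidean norm, $\|G\|_2$ the largest singular value of $G$, $\lambda_{\min}$ the smallest eigenvalue. *)

theory Defs
  imports "HOL-Analysis.Analysis" "HOL-Probability.Probability"
begin

definition strongly_convex :: "real \<Rightarrow> ('a::real_normed_vector \<Rightarrow> real) \<Rightarrow> bool" where
  "strongly_convex \<gamma> f \<longleftrightarrow>
     (\<forall>x y. \<forall>t::real. 0 \<le> t \<and> t \<le> 1 \<longrightarrow>
        f (t *\<^sub>R x + (1 - t) *\<^sub>R y) \<le> t * f x + (1 - t) * f y - \<gamma> / 2 * t * (1 - t) * (norm (x - y))\<^sup>2)"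

definition C2 :: "('a::euclidean_space \<Rightarrow> real) \<Rightarrow> bool" where
  "C2 f \<longleftrightarrow> (\<exists>(Df :: 'a \<Rightarrow> 'a \<Rightarrow>\<^sub>L real) (Df2 :: 'a \<Rightarrow> 'a \<Rightarrow>\<^sub>L ('a \<Rightarrow>\<^sub>L real)).
      (\<forall>p. (f has_derivative blinfun_apply (Df p)) (at p)) \<and>
      (\<forall>p. (Df has_derivative blinfun_apply (Df2 p)) (at p)) \<and>
      continuous_on UNIV Df2)"

text \<open>1-Wasserstein distance, via the Kantorovich--Rubinstein (dual) formula:
  supremum over 1-Lipschitz test functions of the difference of expectations.\<close>
definition W1 :: "'a::{metric_space, second_countable_topology} measure \<Rightarrow> 'a measure \<Rightarrow> ereal" where
  "W1 \<mu> \<nu> = (SUP g \<in> {g :: 'a \<Rightarrow> real. 1-lipschitz_on UNIV g \<and> integrable \<mu> g \<and> integrable \<nu> g}.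
               ereal \<bar>(\<integral>z. g z \<partial>\<mu>) - (\<integral>z. g z \<partial>\<nu>)\<bar>)"

definition eigvals :: "real^'m^'m \<Rightarrow> real set" where
  "eigvals A = {c. \<exists>v. v \<noteq> 0 \<and> A *v v = c *\<^sub>R v}"

definition lambda_min :: "real^'m^'m \<Rightarrow> real" where
  "lambda_min A = Min (eigvals A)"

definition lambda_max :: "real^'m^'m \<Rightarrow> real" where
  "lambda_max A = Max (eigvals A)"

definition sigma_max :: "real^'n^'m \<Rightarrow> real" where
  "sigma_max G = sqrt (lambda_max (transpose G ** G))"

definition pos_part :: "real^'m \<Rightarrow> real^'m" where
  "pos_part a = (\<chi> i. max (a $ i) 0)"

end

theory Submission
  imports Defs
begin

lemma transpose_inner: "(transpose B *v v) \<bullet> x = v \<bullet> (B *v x)"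
  for B :: "real^'a^'b"
  by (simp add: dot_lmul_matrix)

lemma quad_coeff_zero:
  fixes c e :: real
  assumes "\<And>t. 0 \<le> 2 * t * c + t\<^sup>2 * e"
  shows "c = 0"
proof (rule ccontr)
  assume c: "c \<noteq> 0"
  define t where "t = - c / (\<bar>e\<bar> + 1)"
  have pos: "\<bar>e\<bar> + 1 > 0" by simp
  have "t\<^sup>2 * e \<le> t\<^sup>2 * \<bar>e\<bar>" by (simp add: mult_left_mono)
  also have "\<dots> = c\<^sup>2 * \<bar>e\<bar> / (\<bar>e\<bar> + 1)\<^sup>2" by (simp add: t_def power_divide)
  also have "\<dots> \<le> c\<^sup>2 / (\<bar>e\<bar> + 1)"
    using pos by (simp add: power2_eq_square divide_simps mult_left_mono)
  finally have 1: "t\<^sup>2 * e \<le> c\<^sup>2 / (\<bar>e\<bar> + 1)" .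
  have 2: "2 * t * c = - 2 * c\<^sup>2 / (\<bar>e\<bar> + 1)" by (simp add: t_def power2_eq_square)
  have "c\<^sup>2 > 0" using c by simp
  hence "c\<^sup>2 / (\<bar>e\<bar> + 1) > 0" using pos by simp
  with 1 2 assms[of t] show False by linarith
qed

lemma eigvals_finite:
  fixes A :: "real^'m^'m"
  assumes sym: "transpose A = A"
  shows "finite (eigvals A)"
proof -
  define ev where "ev c = (SOME v. v \<noteq> 0 \<and> A *v v = c *\<^sub>R v)" for c
  have ev: "ev c \<noteq> 0 \<and> A *v ev c = c *\<^sub>R ev c" if "c \<in> eigvals A" for c
  proof -
    have "\<exists>v. v \<noteq> 0 \<and> A *v v = c *\<^sub>R v" using that by (simp add: eigvals_def)
    then show ?thesis unfolding ev_def by (rule someI_ex)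
  qed
  have inj: "inj_on ev (eigvals A)"
  proof (rule inj_onI)
    fix c d assume "c \<in> eigvals A" "d \<in> eigvals A" "ev c = ev d"
    then have "c *\<^sub>R ev c = d *\<^sub>R ev c" using ev by metis
    then have "(c - d) *\<^sub>R ev c = 0" by (simp add: algebra_simps)
    then show "c = d" using ev \<open>c \<in> eigvals A\<close> by simp
  qed
  have orth: "pairwise orthogonal (ev ` eigvals A)"
    unfolding pairwise_def
  proof (clarify)
    fix c d assume c: "c \<in> eigvals A" and d: "d \<in> eigvals A" and ne: "ev c \<noteq> ev d"
    then have cd: "c \<noteq> d" by auto
    have "c * (ev c \<bullet> ev d) = (A *v ev c) \<bullet> ev d" using ev[OF c] by simp
    also have "\<dots> = (transpose A *v ev c) \<bullet> ev d" using sym by simp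
    also have "\<dots> = ev c \<bullet> (A *v ev d)" by (rule transpose_inner)
    also have "\<dots> = d * (ev c \<bullet> ev d)" using ev[OF d] by simp
    finally have "(c - d) * (ev c \<bullet> ev d) = 0" by (simp add: algebra_simps)
    then show "orthogonal (ev c) (ev d)" using cd by (simp add: orthogonal_def)
  qed
  have "0 \<notin> ev ` eigvals A" using ev by force
  then have "independent (ev ` eigvals A)" using orth pairwise_orthogonal_independent by blast
  then have "finite (ev ` eigvals A)" by (rule independent_imp_finite)
  then show ?thesis using inj finite_image_iff by blast
qed

lemma sym_tB_B: "transpose (transpose B ** B) = transpose B ** (B :: real^'a^'b)"
  by (simp add: matrix_transpose_mul)

lemma vexp: "(norm (v0 + t *\<^sub>R w))\<^sup>2 = (norm v0)\<^sup>2 + 2 * t * (v0 \<bullet> w) + t\<^sup>2 * (norm w)\<^sup>2"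
  for v0 w :: "'a::real_inner"
  by (simp only: power2_norm_eq_inner) (simp add: inner_add_left inner_add_right algebra_simps power2_eq_square inner_commute)

lemma quad_exp: "(norm (B *v (v0 + t *\<^sub>R w)))\<^sup>2 = (norm (B *v v0))\<^sup>2 + 2 * t * ((B *v v0) \<bullet> (B *v w)) + t\<^sup>2 * (norm (B *v w))\<^sup>2"
  for B :: "real^'a^'b"
  by (simp add: matrix_vector_right_distrib matrix_vector_mult_scaleR vexp)

lemma eig_from_extremal:
  fixes B :: "real^'a^'b"
  assumes n: "norm v0 = 1" and m: "m = (norm (B *v v0))\<^sup>2"
    and ext: "\<And>v. s * (m * (norm v)\<^sup>2) \<le> s * (norm (B *v v))\<^sup>2"
    and s: "s = 1 \<or> s = -1"
  shows "m \<in> eigvals (transpose B ** B)"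
proof -
  define r where "r = (transpose B ** B) *v v0 - m *\<^sub>R v0"
  have c0: "(B *v v0) \<bullet> (B *v w) - m * (v0 \<bullet> w) = 0" for w
  proof -
    have "s * ((B *v v0) \<bullet> (B *v w) - m * (v0 \<bullet> w)) = 0"
    proof (rule quad_coeff_zero[where e = "s * ((norm (B *v w))\<^sup>2 - m * (norm w)\<^sup>2)"])
      fix t
      have "s * (m * (norm (v0 + t *\<^sub>R w))\<^sup>2) \<le> s * (norm (B *v (v0 + t *\<^sub>R w)))\<^sup>2" by (rule ext)
      then have "s * (m * (1 + 2 * t * (v0 \<bullet> w) + t\<^sup>2 * (norm w)\<^sup>2))
         \<le> s * (m + 2 * t * ((B *v v0) \<bullet> (B *v w)) + t\<^sup>2 * (norm (B *v w))\<^sup>2)"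
        by (simp only: quad_exp vexp n m) simp
      then have "0 \<le> s * (2 * t * ((B *v v0) \<bullet> (B *v w) - m * (v0 \<bullet> w)) + t\<^sup>2 * ((norm (B *v w))\<^sup>2 - m * (norm w)\<^sup>2))"
        by (simp add: algebra_simps)
      moreover have "s * (2 * t * ((B *v v0) \<bullet> (B *v w) - m * (v0 \<bullet> w)) + t\<^sup>2 * ((norm (B *v w))\<^sup>2 - m * (norm w)\<^sup>2))
        = 2 * t * (s * ((B *v v0) \<bullet> (B *v w) - m * (v0 \<bullet> w))) + t\<^sup>2 * (s * ((norm (B *v w))\<^sup>2 - m * (norm w)\<^sup>2))"
        by (simp add: algebra_simps)
      ultimately show "0 \<le> 2 * t * (s * ((B *v v0) \<bullet> (B *v w) - m * (v0 \<bullet> w))) + t\<^sup>2 * (s * ((norm (B *v w))\<^sup>2 - m * (norm w)\<^sup>2))"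
        by simp
    qed
    then show ?thesis using s by auto
  qed
  have "r \<bullet> w = 0" for w
  proof -
    have "r \<bullet> w = (transpose B *v (B *v v0)) \<bullet> w - m * (v0 \<bullet> w)"
      by (simp add: r_def matrix_vector_mul_assoc inner_diff_left)
    also have "\<dots> = 0" using c0[of w] by (simp only: transpose_inner)
    finally show ?thesis .
  qed
  then have "r = 0" by (metis inner_eq_zero_iff)
  then have "(transpose B ** B) *v v0 = m *\<^sub>R v0" by (simp add: r_def)
  moreover have "v0 \<noteq> 0" using n by auto
  ultimately show ?thesis unfolding eigvals_def by blast
qed

lemma cont_quad: "continuous_on S (\<lambda>v. (norm (B *v v))\<^sup>2)" for B :: "real^'a^'b"
  by (intro continuous_intros linear_continuous_on matrix_vector_mul_bounded_linear)

lemma scale_sphere: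
  fixes B :: "real^'a^'b"
  assumes "\<And>u. norm u = 1 \<Longrightarrow> s * m \<le> s * (norm (B *v u))\<^sup>2"
  shows "s * (m * (norm v)\<^sup>2) \<le> s * (norm (B *v v))\<^sup>2"
proof (cases "v = 0")
  case True then show ?thesis by simp
next
  case False
  define u where "u = (1 / norm v) *\<^sub>R v"
  have nu: "norm u = 1" using False by (simp add: u_def)
  have v: "v = norm v *\<^sub>R u" using False by (simp add: u_def)
  have "(norm (B *v v))\<^sup>2 = (norm v)\<^sup>2 * (norm (B *v u))\<^sup>2"
    by (subst v) (simp add: matrix_vector_mult_scaleR power_mult_distrib)
  moreover have "(norm v)\<^sup>2 * (s * m) \<le> (norm v)\<^sup>2 * (s * (norm (B *v u))\<^sup>2)"
    using assms[OF nu] by (simp add: mult_left_mono)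
  ultimately show ?thesis by (simp add: algebra_simps)
qed

lemma sphere_ne: "sphere (0::real^'a) 1 \<noteq> {}"
proof -
  obtain i :: 'a where True by simp
  have "axis i (1::real) \<in> sphere 0 1" by (simp add: norm_axis_1)
  then show ?thesis by blast
qed

lemma rayleigh_min:
  fixes B :: "real^'a^'b"
  shows "\<exists>m \<in> eigvals (transpose B ** B). \<forall>v. m * (norm v)\<^sup>2 \<le> (norm (B *v v))\<^sup>2"
proof -
  obtain v0 where v0: "v0 \<in> sphere 0 1" and mn: "\<forall>y\<in>sphere 0 1. (norm (B *v v0))\<^sup>2 \<le> (norm (B *v y))\<^sup>2"
    using continuous_attains_inf[OF compact_sphere sphere_ne cont_quad] by blast
  define m where "m = (norm (B *v v0))\<^sup>2"
  have ext: "1 * (m * (norm v)\<^sup>2) \<le> 1 * (norm (B *v v))\<^sup>2" for v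
    by (rule scale_sphere) (use mn in \<open>simp add: m_def\<close>)
  have "m \<in> eigvals (transpose B ** B)"
    by (rule eig_from_extremal[OF _ m_def ext]) (use v0 in auto)
  then show ?thesis using ext by auto
qed

lemma rayleigh_max:
  fixes B :: "real^'a^'b"
  shows "\<exists>m \<in> eigvals (transpose B ** B). \<forall>v. (norm (B *v v))\<^sup>2 \<le> m * (norm v)\<^sup>2"
proof -
  obtain v0 where v0: "v0 \<in> sphere 0 1" and mn: "\<forall>y\<in>sphere 0 1. (norm (B *v y))\<^sup>2 \<le> (norm (B *v v0))\<^sup>2"
    using continuous_attains_sup[OF compact_sphere sphere_ne cont_quad] by blast
  define m where "m = (norm (B *v v0))\<^sup>2"
  have ext: "(-1) * (m * (norm v)\<^sup>2) \<le> (-1) * (norm (B *v v))\<^sup>2" for v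
    by (rule scale_sphere) (use mn in \<open>simp add: m_def\<close>)
  have "m \<in> eigvals (transpose B ** B)"
    by (rule eig_from_extremal[OF _ m_def ext]) (use v0 in auto)
  then show ?thesis using ext by auto
qed

lemma lambda_min_bound:
  fixes G :: "real^'n^'w"
  shows "lambda_min (G ** transpose G) * (norm v)\<^sup>2 \<le> (norm (transpose G *v v))\<^sup>2"
proof -
  obtain m where m: "m \<in> eigvals (transpose (transpose G) ** transpose G)"
    and b: "\<forall>v. m * (norm v)\<^sup>2 \<le> (norm (transpose G *v v))\<^sup>2"
    using rayleigh_min[of "transpose G"] by blast
  have fin: "finite (eigvals (G ** transpose G))"
    using eigvals_finite sym_tB_B[of "transpose G"] by simp
  have "lambda_min (G ** transpose G) \<le> m"
    unfolding lambda_min_def using m fin by simp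
  then have "lambda_min (G ** transpose G) * (norm v)\<^sup>2 \<le> m * (norm v)\<^sup>2"
    by (simp add: mult_right_mono)
  then show ?thesis using b by smt
qed

lemma sigma_max_bound:
  fixes G :: "real^'n^'w"
  shows "sigma_max G \<ge> 0" "norm (G *v x) \<le> sigma_max G * norm x"
proof -
  obtain m where m: "m \<in> eigvals (transpose G ** G)"
    and b: "\<forall>v. (norm (G *v v))\<^sup>2 \<le> m * (norm v)\<^sup>2"
    using rayleigh_max[of G] by blast
  have fin: "finite (eigvals (transpose G ** G))"
    using eigvals_finite[OF sym_tB_B[of G]] by simp
  have le: "m \<le> lambda_max (transpose G ** G)"
    unfolding lambda_max_def using m fin by simp
  obtain i :: 'n where True by simp
  have "0 \<le> m" using b[rule_format, of "axis i 1"] by (simp add: norm_axis_1) (smt (verit) zero_le_power2)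
  then have l0: "0 \<le> lambda_max (transpose G ** G)" using le by simp
  then show "sigma_max G \<ge> 0" by (simp add: sigma_max_def)
  have "(norm (G *v x))\<^sup>2 \<le> lambda_max (transpose G ** G) * (norm x)\<^sup>2"
    using b[rule_format, of x] le by (smt (verit) mult_right_mono zero_le_power2)
  also have "\<dots> = (sigma_max G * norm x)\<^sup>2"
    using l0 by (simp add: sigma_max_def power_mult_distrib)
  finally show "norm (G *v x) \<le> sigma_max G * norm x"
    using \<open>sigma_max G \<ge> 0\<close> by (meson norm_ge_zero power2_le_imp_le mult_nonneg_nonneg)
qed

lemma sigma_max_transpose:
  fixes G :: "real^'n^'w"
  shows "norm (transpose G *v v) \<le> sigma_max G * norm v"
proof -
  let ?u = "transpose G *v v"
  have "(norm ?u)\<^sup>2 = v \<bullet> (G *v ?u)" by (simp only: power2_norm_eq_inner transpose_inner)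
  also have "\<dots> \<le> norm v * norm (G *v ?u)" by (rule Cauchy_Schwarz_ineq2[THEN order_trans[OF abs_ge_self]])
  also have "\<dots> \<le> norm v * (sigma_max G * norm ?u)" by (simp add: mult_left_mono sigma_max_bound)
  finally have *: "norm ?u * norm ?u \<le> norm ?u * (sigma_max G * norm v)" by (simp add: power2_eq_square algebra_simps)
  show ?thesis
  proof (cases "norm ?u = 0")
    case True then show ?thesis using sigma_max_bound(1)[of G] by simp
  next
    case False then show ?thesis using * by (simp add: mult_le_cancel_left)
  qed
qed

lemma line_deriv:
  fixes \<phi> :: "'a::real_inner \<Rightarrow> real"
  assumes "GDERIV \<phi> (x0 + s *\<^sub>R h) :> D"
  shows "((\<lambda>s. \<phi> (x0 + s *\<^sub>R h)) has_real_derivative (D \<bullet> h)) (at s)"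
proof -
  have p: "((\<lambda>s. x0 + s *\<^sub>R h) has_derivative (\<lambda>t. t *\<^sub>R h)) (at s)"
    by (auto intro!: derivative_eq_intros)
  have g: "(\<phi> has_derivative (\<lambda>k. k \<bullet> D)) (at (x0 + s *\<^sub>R h))"
    using assms by (simp add: gderiv_def)
  have "((\<lambda>s. \<phi> (x0 + s *\<^sub>R h)) has_derivative (\<lambda>t. (t *\<^sub>R h) \<bullet> D)) (at s)"
    using has_derivative_compose[OF p g] by simp
  moreover have "(\<lambda>t. (t *\<^sub>R h) \<bullet> D) = (*) (D \<bullet> h)"
    by (auto simp: inner_commute)
  ultimately show ?thesis by (simp add: has_field_derivative_def)
qed

lemma sc_inst:
  assumes "strongly_convex \<gamma> \<phi>" "0 \<le> t" "t \<le> 1"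
  shows "\<phi> (t *\<^sub>R x + (1 - t) *\<^sub>R y) \<le> t * \<phi> x + (1 - t) * \<phi> y - \<gamma> / 2 * t * (1 - t) * (norm (x - y))\<^sup>2"
  using assms unfolding strongly_convex_def by blast

lemma sc_lower:
  fixes \<phi> :: "'a::real_inner \<Rightarrow> real"
  assumes sc: "strongly_convex \<gamma> \<phi>" and d: "\<And>s. GDERIV \<phi> (x0 + s *\<^sub>R h) :> gr s"
    and d0: "gr 0 = g"
  shows "\<phi> x0 + g \<bullet> h + \<gamma> / 2 * (norm h)\<^sup>2 \<le> \<phi> (x0 + h)"
proof -
  let ?\<psi> = "\<lambda>s. \<phi> (x0 + s *\<^sub>R h)"
  have "(?\<psi> has_real_derivative (g \<bullet> h)) (at 0)"
    using line_deriv[OF d[of 0]] d0 by simp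
  then have lim: "((\<lambda>t. (?\<psi> t - ?\<psi> 0) / (t - 0)) \<longlongrightarrow> g \<bullet> h) (at_right 0)"
    unfolding has_field_derivative_iff by (rule tendsto_mono[OF at_le, rotated]) simp
  have lim2: "((\<lambda>t. \<phi> (x0 + h) - \<phi> x0 - \<gamma> / 2 * (1 - t) * (norm h)\<^sup>2) \<longlongrightarrow>
      \<phi> (x0 + h) - \<phi> x0 - \<gamma> / 2 * (1 - 0) * (norm h)\<^sup>2) (at_right 0)"
    by (intro tendsto_intros)
  have ev: "eventually (\<lambda>t. (?\<psi> t - ?\<psi> 0) / (t - 0) \<le> \<phi> (x0 + h) - \<phi> x0 - \<gamma> / 2 * (1 - t) * (norm h)\<^sup>2) (at_right 0)"
    using eventually_at_right_real[of 0 1]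
  proof (rule eventually_mono)
    fix t :: real assume t: "t \<in> {0<..<1}"
    have "\<phi> (t *\<^sub>R (x0 + h) + (1 - t) *\<^sub>R x0) \<le> t * \<phi> (x0 + h) + (1 - t) * \<phi> x0 - \<gamma> / 2 * t * (1 - t) * (norm (x0 + h - x0))\<^sup>2"
      using sc_inst[OF sc, of t "x0 + h" x0] t by simp
    moreover have "t *\<^sub>R (x0 + h) + (1 - t) *\<^sub>R x0 = x0 + t *\<^sub>R h" by (simp add: algebra_simps)
    ultimately have "?\<psi> t - ?\<psi> 0 \<le> t * (\<phi> (x0 + h) - \<phi> x0 - \<gamma> / 2 * (1 - t) * (norm h)\<^sup>2)"
      by (simp add: algebra_simps)
    then show "(?\<psi> t - ?\<psi> 0) / (t - 0) \<le> \<phi> (x0 + h) - \<phi> x0 - \<gamma> / 2 * (1 - t) * (norm h)\<^sup>2"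
      using t by (simp add: divide_simps mult.commute)
  qed simp
  have "g \<bullet> h \<le> \<phi> (x0 + h) - \<phi> x0 - \<gamma> / 2 * (1 - 0) * (norm h)\<^sup>2"
    by (rule tendsto_le[OF _ lim2 lim ev]) simp
  then show ?thesis by simp
qed

lemma lip_upper:
  fixes \<phi> :: "'a::real_inner \<Rightarrow> real"
  assumes d: "\<And>x. GDERIV \<phi> x :> gr x"
    and lip: "\<And>x y. norm (gr x - gr y) \<le> \<beta> * norm (x - y)"
  shows "\<phi> (x0 + h) \<le> \<phi> x0 + gr x0 \<bullet> h + \<beta> / 2 * (norm h)\<^sup>2"
proof -
  define \<psi> where "\<psi> s = \<phi> (x0 + s *\<^sub>R h) - s * (gr x0 \<bullet> h) - \<beta> / 2 * s\<^sup>2 * (norm h)\<^sup>2" for s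
  have "\<psi> 1 \<le> \<psi> 0"
  proof (rule DERIV_nonpos_imp_nonincreasing[of 0 1])
    fix s :: real assume s: "0 \<le> s" "s \<le> 1"
    have "(\<psi> has_real_derivative (gr (x0 + s *\<^sub>R h) \<bullet> h - gr x0 \<bullet> h - \<beta> / 2 * (2 * s) * (norm h)\<^sup>2)) (at s)"
    proof -
      have l: "((\<lambda>s. \<phi> (x0 + s *\<^sub>R h)) has_real_derivative (gr (x0 + s *\<^sub>R h) \<bullet> h)) (at s)"
        by (rule line_deriv) (rule d)
      have q: "((\<lambda>s. s * (gr x0 \<bullet> h) + \<beta> / 2 * s\<^sup>2 * (norm h)\<^sup>2) has_real_derivative (gr x0 \<bullet> h + \<beta> / 2 * (2 * s) * (norm h)\<^sup>2)) (at s)"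
        by (auto intro!: derivative_eq_intros)
      have "(\<psi> has_real_derivative (gr (x0 + s *\<^sub>R h) \<bullet> h - (gr x0 \<bullet> h + \<beta> / 2 * (2 * s) * (norm h)\<^sup>2))) (at s)"
        unfolding \<psi>_def diff_diff_eq by (rule DERIV_diff[OF l q])
      then show ?thesis by (simp add: algebra_simps)
    qed
    moreover have "gr (x0 + s *\<^sub>R h) \<bullet> h - gr x0 \<bullet> h - \<beta> / 2 * (2 * s) * (norm h)\<^sup>2 \<le> 0"
    proof -
      have "gr (x0 + s *\<^sub>R h) \<bullet> h - gr x0 \<bullet> h = (gr (x0 + s *\<^sub>R h) - gr x0) \<bullet> h"
        by (simp add: inner_diff_left)
      also have "\<dots> \<le> norm (gr (x0 + s *\<^sub>R h) - gr x0) * norm h"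
        by (rule order_trans[OF abs_ge_self Cauchy_Schwarz_ineq2])
      also have "\<dots> \<le> (\<beta> * norm (s *\<^sub>R h)) * norm h"
        using lip[of "x0 + s *\<^sub>R h" x0] by (simp add: mult_right_mono)
      also have "\<dots> = \<beta> / 2 * (2 * s) * (norm h)\<^sup>2"
        using s by (simp add: power2_eq_square)
      finally show ?thesis by simp
    qed
    ultimately show "\<exists>y. (\<psi> has_real_derivative y) (at s) \<and> y \<le> 0" by blast
  qed simp
  then show ?thesis by (simp add: \<psi>_def)
qed

lemma quot_seq:
  fixes \<phi> :: "'a::real_inner \<Rightarrow> real"
  assumes d: "\<And>s. GDERIV \<phi> (x0 + s *\<^sub>R e) :> gr s" and d0: "gr 0 = g"
  shows "(\<lambda>n. (\<phi> (x0 + inverse (real (Suc n)) *\<^sub>R e) - \<phi> x0) / inverse (real (Suc n))) \<longlonglongrightarrow> g \<bullet> e"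
proof -
  let ?\<psi> = "\<lambda>s. \<phi> (x0 + s *\<^sub>R e)"
  have "(?\<psi> has_real_derivative (g \<bullet> e)) (at 0)"
    using line_deriv[OF d[of 0]] d0 by simp
  then have lim: "((\<lambda>t. (?\<psi> t - ?\<psi> 0) / (t - 0)) \<longlongrightarrow> g \<bullet> e) (at 0)"
    unfolding has_field_derivative_iff .
  have sq: "filterlim (\<lambda>n. inverse (real (Suc n))) (at 0) sequentially"
    unfolding filterlim_at using LIMSEQ_inverse_real_of_nat by auto
  show ?thesis using filterlim_compose[OF lim sq] by simp
qed

lemma sandwich_int:
  fixes l :: "real^'n \<Rightarrow> 'z \<Rightarrow> real" and gradl :: "real^'n \<Rightarrow> 'z \<Rightarrow> real^'n"
  assumes M: "prob_space M" and AE: "AE z in M. z \<in> Z"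
    and lint: "\<And>x. integrable M (l x)"
    and grad: "\<And>x z. GDERIV (\<lambda>u. l u z) x :> gradl x z"
    and sc: "\<And>z. z \<in> Z \<Longrightarrow> strongly_convex \<gamma> (\<lambda>x. l x z)"
    and lip: "\<And>x y z. z \<in> Z \<Longrightarrow> norm (gradl x z - gradl y z) \<le> \<beta> * norm (x - y)"
    and \<gamma>: "\<gamma> \<ge> 0"
  shows "\<exists>p. \<forall>h. (\<integral>z. l x0 z \<partial>M) + p \<bullet> h + \<gamma> / 2 * (norm h)\<^sup>2 \<le> (\<integral>z. l (x0 + h) z \<partial>M) \<and>
      (\<integral>z. l (x0 + h) z \<partial>M) \<le> (\<integral>z. l x0 z \<partial>M) + p \<bullet> h + \<beta> / 2 * (norm h)\<^sup>2"
proof -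
  interpret prob_space M by (rule M)
  have L: "l x0 z + gradl x0 z \<bullet> h + \<gamma> / 2 * (norm h)\<^sup>2 \<le> l (x0 + h) z" if "z \<in> Z" for z h
    by (rule sc_lower[OF sc[OF that], where gr = "\<lambda>s. gradl (x0 + s *\<^sub>R h) z"]) (auto intro: grad)
  have U: "l (x0 + h) z \<le> l x0 z + gradl x0 z \<bullet> h + \<beta> / 2 * (norm h)\<^sup>2" if "z \<in> Z" for z h
    by (rule lip_upper[where gr = "\<lambda>x. gradl x z"]) (auto intro: grad lip[OF that])
  have meas: "(\<lambda>z. gradl x0 z $ i) \<in> borel_measurable M" for i
  proof (rule borel_measurable_LIMSEQ_real)
    fix z
    show "(\<lambda>n. (l (x0 + inverse (real (Suc n)) *\<^sub>R axis i 1) z - l x0 z) / inverse (real (Suc n))) \<longlonglongrightarrow> gradl x0 z $ i"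
    proof -
      have "(\<lambda>n. (l (x0 + inverse (real (Suc n)) *\<^sub>R axis i 1) z - l x0 z) / inverse (real (Suc n))) \<longlonglongrightarrow> gradl x0 z \<bullet> axis i 1"
        by (rule quot_seq[where \<phi> = "\<lambda>u. l u z" and gr = "\<lambda>s. gradl (x0 + s *\<^sub>R axis i 1) z"]) (auto intro: grad)
      then show ?thesis by (simp add: inner_axis)
    qed
  next
    fix n
    show "(\<lambda>z. (l (x0 + inverse (real (Suc n)) *\<^sub>R axis i 1) z - l x0 z) / inverse (real (Suc n))) \<in> borel_measurable M"
      using lint by (intro borel_measurable_divide borel_measurable_diff borel_measurable_const) auto
  qed
  have gint: "integrable M (\<lambda>z. gradl x0 z $ i)" for i
  proof (rule Bochner_Integration.integrable_bound[OF _ meas])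
    show "integrable M (\<lambda>z. \<bar>l (x0 + axis i 1) z - l x0 z\<bar> + \<bar>l (x0 + (- axis i 1)) z - l x0 z\<bar>)"
      by (intro Bochner_Integration.integrable_add integrable_abs Bochner_Integration.integrable_diff lint)
    show "AE z in M. norm (gradl x0 z $ i) \<le> norm (\<bar>l (x0 + axis i 1) z - l x0 z\<bar> + \<bar>l (x0 + (- axis i 1)) z - l x0 z\<bar>)"
      using AE
    proof (rule AE_mp, intro AE_I2 impI)
      fix z assume z: "z \<in> Z"
      have 1: "gradl x0 z $ i \<le> l (x0 + axis i 1) z - l x0 z"
        using L[OF z, of "axis i 1"] \<gamma> by (simp add: inner_axis norm_axis_1)
      have 2: "- gradl x0 z $ i \<le> l (x0 + (- axis i 1)) z - l x0 z"
        using L[OF z, of "- axis i 1"] \<gamma> by (simp add: inner_axis norm_axis_1)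
      show "norm (gradl x0 z $ i) \<le> norm (\<bar>l (x0 + axis i 1) z - l x0 z\<bar> + \<bar>l (x0 + (- axis i 1)) z - l x0 z\<bar>)"
        using 1 2 by simp
    qed
  qed
  define p where "p = (\<chi> i. \<integral>z. gradl x0 z $ i \<partial>M)"
  have ghint: "integrable M (\<lambda>z. gradl x0 z \<bullet> h)" for h
    unfolding inner_vec_def inner_real_def by (intro Bochner_Integration.integrable_sum integrable_mult_left gint)
  have ph: "p \<bullet> h = (\<integral>z. gradl x0 z \<bullet> h \<partial>M)" for h
  proof -
    have "(\<integral>z. gradl x0 z \<bullet> h \<partial>M) = (\<Sum>i\<in>UNIV. \<integral>z. gradl x0 z $ i * h $ i \<partial>M)"
      unfolding inner_vec_def inner_real_def by (intro Bochner_Integration.integral_sum integrable_mult_left gint)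
    also have "\<dots> = p \<bullet> h" unfolding p_def inner_vec_def inner_real_def by simp
    finally show ?thesis by simp
  qed
  show ?thesis
  proof (intro exI allI conjI)
    fix h
    have i1: "integrable M (\<lambda>z. l x0 z + gradl x0 z \<bullet> h + \<gamma> / 2 * (norm h)\<^sup>2)"
      by (intro Bochner_Integration.integrable_add lint ghint integrable_const)
    have i2: "integrable M (\<lambda>z. l x0 z + gradl x0 z \<bullet> h + \<beta> / 2 * (norm h)\<^sup>2)"
      by (intro Bochner_Integration.integrable_add lint ghint integrable_const)
    have e1: "(\<integral>z. l x0 z + gradl x0 z \<bullet> h + \<gamma> / 2 * (norm h)\<^sup>2 \<partial>M) = (\<integral>z. l x0 z \<partial>M) + p \<bullet> h + \<gamma> / 2 * (norm h)\<^sup>2"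
      using lint ghint by (simp add: ph prob_space)
    have e2: "(\<integral>z. l x0 z + gradl x0 z \<bullet> h + \<beta> / 2 * (norm h)\<^sup>2 \<partial>M) = (\<integral>z. l x0 z \<partial>M) + p \<bullet> h + \<beta> / 2 * (norm h)\<^sup>2"
      using lint ghint by (simp add: ph prob_space)
    show "(\<integral>z. l x0 z \<partial>M) + p \<bullet> h + \<gamma> / 2 * (norm h)\<^sup>2 \<le> (\<integral>z. l (x0 + h) z \<partial>M)"
      unfolding e1[symmetric]
      by (rule integral_mono_AE[OF i1 lint], rule AE_mp[OF AE], rule AE_I2) (use L in auto)
    show "(\<integral>z. l (x0 + h) z \<partial>M) \<le> (\<integral>z. l x0 z \<partial>M) + p \<bullet> h + \<beta> / 2 * (norm h)\<^sup>2"
      unfolding e2[symmetric]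
      by (rule integral_mono_AE[OF lint i2], rule AE_mp[OF AE], rule AE_I2) (use U in auto)
  qed
qed

definition sandw :: "real \<Rightarrow> real \<Rightarrow> ('a::real_inner \<Rightarrow> real) \<Rightarrow> bool" where
  "sandw \<gamma> \<beta> F \<longleftrightarrow> (\<forall>x0. \<exists>p. \<forall>h. F x0 + p \<bullet> h + \<gamma> / 2 * (norm h)\<^sup>2 \<le> F (x0 + h) \<and>
      F (x0 + h) \<le> F x0 + p \<bullet> h + \<beta> / 2 * (norm h)\<^sup>2)"

lemma sandw_lin:
  assumes "sandw \<gamma> \<beta> F"
  shows "sandw \<gamma> \<beta> (\<lambda>x. F x + b \<bullet> x + c)"
  unfolding sandw_def
proof
  fix x0
  obtain p where p: "\<And>h. F x0 + p \<bullet> h + \<gamma> / 2 * (norm h)\<^sup>2 \<le> F (x0 + h) \<and>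
      F (x0 + h) \<le> F x0 + p \<bullet> h + \<beta> / 2 * (norm h)\<^sup>2"
    using assms unfolding sandw_def by blast
  show "\<exists>p. \<forall>h. F x0 + b \<bullet> x0 + c + p \<bullet> h + \<gamma> / 2 * (norm h)\<^sup>2 \<le> F (x0 + h) + b \<bullet> (x0 + h) + c \<and>
      F (x0 + h) + b \<bullet> (x0 + h) + c \<le> F x0 + b \<bullet> x0 + c + p \<bullet> h + \<beta> / 2 * (norm h)\<^sup>2"
  proof (rule exI[of _ "p + b"], intro allI)
    fix h
    show "F x0 + b \<bullet> x0 + c + (p + b) \<bullet> h + \<gamma> / 2 * (norm h)\<^sup>2 \<le> F (x0 + h) + b \<bullet> (x0 + h) + c \<and>
      F (x0 + h) + b \<bullet> (x0 + h) + c \<le> F x0 + b \<bullet> x0 + c + (p + b) \<bullet> h + \<beta> / 2 * (norm h)\<^sup>2"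
      using p[of h] by (simp add: inner_add_left inner_add_right)
  qed
qed

lemma sandw_min:
  assumes s: "sandw \<gamma> \<beta> F" and m: "\<And>x. F y \<le> F x"
  shows "F y + \<gamma> / 2 * (norm h)\<^sup>2 \<le> F (y + h) \<and> F (y + h) \<le> F y + \<beta> / 2 * (norm h)\<^sup>2"
proof -
  obtain p where p: "\<And>h. F y + p \<bullet> h + \<gamma> / 2 * (norm h)\<^sup>2 \<le> F (y + h) \<and>
      F (y + h) \<le> F y + p \<bullet> h + \<beta> / 2 * (norm h)\<^sup>2"
    using s unfolding sandw_def by blast
  have "p = 0"
  proof (rule ccontr)
    assume p0: "p \<noteq> 0"
    define s where "s = 1 / (\<bar>\<beta>\<bar> + 1)"
    have s0: "s > 0" by (simp add: s_def)
    have "F y \<le> F (y + (- s) *\<^sub>R p)" by (rule m)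
    also have "\<dots> \<le> F y + p \<bullet> ((- s) *\<^sub>R p) + \<beta> / 2 * (norm ((- s) *\<^sub>R p))\<^sup>2" using p by blast
    finally have "0 \<le> - s * (norm p)\<^sup>2 + \<beta> / 2 * s\<^sup>2 * (norm p)\<^sup>2"
      using s0 by (simp add: power2_norm_eq_inner power_mult_distrib)
    also have "\<beta> / 2 * s\<^sup>2 * (norm p)\<^sup>2 \<le> s / 2 * (norm p)\<^sup>2"
    proof -
      have "\<beta> * s \<le> 1" unfolding s_def using abs_ge_self[of \<beta>] by (simp add: divide_simps)
      then have "\<beta> * s * s \<le> 1 * s" using s0 by (metis less_imp_le mult_right_mono)
      then have "\<beta> / 2 * s\<^sup>2 \<le> s / 2" by (simp add: power2_eq_square)
      then show ?thesis by (simp add: mult_right_mono)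
    qed
    finally have "0 \<le> - s * (norm p)\<^sup>2 + s / 2 * (norm p)\<^sup>2" by simp
    moreover have "(norm p)\<^sup>2 > 0" using p0 by simp
    moreover have "s / 2 * (norm p)\<^sup>2 > 0" using s0 p0 by simp
    ultimately show False by linarith
  qed
  then show ?thesis using p[of h] by simp
qed

lemma sandw_cont:
  fixes F :: "'a::real_inner \<Rightarrow> real"
  assumes s: "sandw \<gamma> \<beta> F"
  shows "continuous_on UNIV F"
proof (rule continuous_at_imp_continuous_on, intro ballI)
  fix x0
  obtain p where p: "\<And>h. F x0 + p \<bullet> h + \<gamma> / 2 * (norm h)\<^sup>2 \<le> F (x0 + h) \<and>
      F (x0 + h) \<le> F x0 + p \<bullet> h + \<beta> / 2 * (norm h)\<^sup>2"
    using s unfolding sandw_def by blast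
  have "((\<lambda>x. F x - F x0) \<longlongrightarrow> 0) (at x0)"
  proof (rule Lim_null_comparison)
    show "eventually (\<lambda>x. norm (F x - F x0) \<le> norm p * norm (x - x0) + (\<bar>\<gamma>\<bar> + \<bar>\<beta>\<bar>) * (norm (x - x0))\<^sup>2) (at x0)"
    proof (rule always_eventually, rule allI)
      fix x
      have e: "x = x0 + (x - x0)" by simp
      have b: "\<bar>p \<bullet> (x - x0)\<bar> \<le> norm p * norm (x - x0)" by (rule Cauchy_Schwarz_ineq2)
      have g: "\<bar>\<gamma> / 2 * (norm (x - x0))\<^sup>2\<bar> \<le> (\<bar>\<gamma>\<bar> + \<bar>\<beta>\<bar>) * (norm (x - x0))\<^sup>2"
      proof -
        have "\<bar>\<gamma> / 2\<bar> \<le> \<bar>\<gamma>\<bar> + \<bar>\<beta>\<bar>" by simp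
        then show ?thesis by (simp only: abs_mult abs_power2 abs_norm_cancel) (rule mult_right_mono, assumption, simp)
      qed
      have g2: "\<bar>\<beta> / 2 * (norm (x - x0))\<^sup>2\<bar> \<le> (\<bar>\<gamma>\<bar> + \<bar>\<beta>\<bar>) * (norm (x - x0))\<^sup>2"
      proof -
        have "\<bar>\<beta> / 2\<bar> \<le> \<bar>\<gamma>\<bar> + \<bar>\<beta>\<bar>" by simp
        then show ?thesis by (simp only: abs_mult abs_power2 abs_norm_cancel) (rule mult_right_mono, assumption, simp)
      qed
      show "norm (F x - F x0) \<le> norm p * norm (x - x0) + (\<bar>\<gamma>\<bar> + \<bar>\<beta>\<bar>) * (norm (x - x0))\<^sup>2"
      proof -
        have pp: "F x0 + p \<bullet> (x - x0) + \<gamma> / 2 * (norm (x - x0))\<^sup>2 \<le> F x"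
                 "F x \<le> F x0 + p \<bullet> (x - x0) + \<beta> / 2 * (norm (x - x0))\<^sup>2"
          using p[of "x - x0"] by simp_all
        from b g g2 show ?thesis unfolding real_norm_def abs_le_iff using pp by linarith
      qed
    qed
    show "((\<lambda>x. norm p * norm (x - x0) + (\<bar>\<gamma>\<bar> + \<bar>\<beta>\<bar>) * (norm (x - x0))\<^sup>2) \<longlongrightarrow> 0) (at x0)"
    proof -
      have "((\<lambda>x. norm p * norm (x - x0) + (\<bar>\<gamma>\<bar> + \<bar>\<beta>\<bar>) * (norm (x - x0))\<^sup>2) \<longlongrightarrow>
          norm p * norm (x0 - x0) + (\<bar>\<gamma>\<bar> + \<bar>\<beta>\<bar>) * (norm (x0 - x0))\<^sup>2) (at x0)"
        by (intro tendsto_intros)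
      then show ?thesis by simp
    qed
  qed
  then show "isCont F x0" unfolding isCont_def using Lim_null by blast
qed

lemma sandw_exists_min:
  fixes F :: "'a::euclidean_space \<Rightarrow> real"
  assumes s: "sandw \<gamma> \<beta> F" and g: "\<gamma> > 0"
  shows "\<exists>y. \<forall>x. F y \<le> F x"
proof -
  obtain q where q: "\<And>h. F 0 + q \<bullet> h + \<gamma> / 2 * (norm h)\<^sup>2 \<le> F (0 + h)"
    using s unfolding sandw_def by blast
  define R where "R = 2 * norm q / \<gamma> + 1"
  have R0: "R \<ge> 0" using g by (simp add: R_def)
  obtain y where y: "y \<in> cball 0 R" and ym: "\<forall>x\<in>cball 0 R. F y \<le> F x"
    using continuous_attains_inf[OF compact_cball, of 0 R F] R0
      continuous_on_subset[OF sandw_cont[OF s]] by auto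
  have "F y \<le> F x" for x
  proof (cases "x \<in> cball 0 R")
    case True then show ?thesis using ym by blast
  next
    case False
    then have xR: "norm x > R" by simp
    have "F y \<le> F 0" using ym R0 by simp
    also have "F 0 \<le> F x"
    proof -
      have "- (norm q * norm x) \<le> q \<bullet> x" using Cauchy_Schwarz_ineq2[of q x] by linarith
      moreover have "norm q * norm x \<le> \<gamma> / 2 * (norm x)\<^sup>2"
      proof -
        have "norm q \<le> \<gamma> / 2 * norm x" using xR g by (simp add: R_def field_simps)
        then have "norm q * norm x \<le> (\<gamma> / 2 * norm x) * norm x" by (rule mult_right_mono) simp
        then show ?thesis by (simp add: power2_eq_square mult.assoc)
      qed
      ultimately show ?thesis using q[of x] by simp
    qed
    finally show ?thesis .
  qed
  then show ?thesis by blast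
qed

lemma minimizer_mono:
  fixes F :: "'a::real_inner \<Rightarrow> real"
  assumes s: "sandw \<gamma> \<beta> F" and b: "\<beta> > 0"
    and m1: "\<And>x. F y1 + b1 \<bullet> y1 \<le> F x + b1 \<bullet> x"
    and m2: "\<And>x. F y2 + b2 \<bullet> y2 \<le> F x + b2 \<bullet> x"
  shows "(b1 - b2) \<bullet> (y1 - y2) \<le> - (norm (b1 - b2))\<^sup>2 / \<beta>"
    and "\<gamma> * (norm (y1 - y2))\<^sup>2 \<le> - ((b1 - b2) \<bullet> (y1 - y2))"
proof -
  define \<Phi>1 where "\<Phi>1 x = F x + b1 \<bullet> x + 0" for x
  define \<Phi>2 where "\<Phi>2 x = F x + b2 \<bullet> x + 0" for x
  have s1: "sandw \<gamma> \<beta> \<Phi>1" unfolding \<Phi>1_def by (rule sandw_lin[OF s])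
  have s2: "sandw \<gamma> \<beta> \<Phi>2" unfolding \<Phi>2_def by (rule sandw_lin[OF s])
  have M1: "\<And>h. \<Phi>1 y1 + \<gamma> / 2 * (norm h)\<^sup>2 \<le> \<Phi>1 (y1 + h) \<and> \<Phi>1 (y1 + h) \<le> \<Phi>1 y1 + \<beta> / 2 * (norm h)\<^sup>2"
    by (rule sandw_min[OF s1]) (simp add: \<Phi>1_def m1)
  have M2: "\<And>h. \<Phi>2 y2 + \<gamma> / 2 * (norm h)\<^sup>2 \<le> \<Phi>2 (y2 + h) \<and> \<Phi>2 (y2 + h) \<le> \<Phi>2 y2 + \<beta> / 2 * (norm h)\<^sup>2"
    by (rule sandw_min[OF s2]) (simp add: \<Phi>2_def m2)
  define \<delta> where "\<delta> = b1 - b2"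
  have rel: "\<Phi>2 x = \<Phi>1 x - \<delta> \<bullet> x" for x by (simp add: \<Phi>1_def \<Phi>2_def \<delta>_def inner_diff_left)
  have nh: "(norm ((1 / \<beta>) *\<^sub>R \<delta>))\<^sup>2 = (norm \<delta>)\<^sup>2 / \<beta>\<^sup>2" using b by (simp add: power_divide)
  have ih: "\<delta> \<bullet> ((1 / \<beta>) *\<^sub>R \<delta>) = (norm \<delta>)\<^sup>2 / \<beta>" by (simp add: power2_norm_eq_inner)
  have E1: "\<Phi>2 y2 \<le> \<Phi>1 y1 - \<delta> \<bullet> y1 - (norm \<delta>)\<^sup>2 / (2 * \<beta>)"
  proof -
    have "\<Phi>2 y2 \<le> \<Phi>2 (y2 + ((y1 + (1 / \<beta>) *\<^sub>R \<delta>) - y2))" using M2[of "(y1 + (1 / \<beta>) *\<^sub>R \<delta>) - y2"] M2[of 0]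
      using m2 unfolding \<Phi>2_def by simp
    also have "\<dots> = \<Phi>1 (y1 + (1 / \<beta>) *\<^sub>R \<delta>) - \<delta> \<bullet> (y1 + (1 / \<beta>) *\<^sub>R \<delta>)" by (simp add: rel)
    also have "\<dots> \<le> \<Phi>1 y1 + \<beta> / 2 * ((norm \<delta>)\<^sup>2 / \<beta>\<^sup>2) - \<delta> \<bullet> y1 - (norm \<delta>)\<^sup>2 / \<beta>"
    proof -
      have A: "\<Phi>1 (y1 + (1 / \<beta>) *\<^sub>R \<delta>) \<le> \<Phi>1 y1 + \<beta> / 2 * (norm ((1 / \<beta>) *\<^sub>R \<delta>))\<^sup>2"
        using M1[of "(1 / \<beta>) *\<^sub>R \<delta>"] by blast
      have B: "\<delta> \<bullet> (y1 + (1 / \<beta>) *\<^sub>R \<delta>) = \<delta> \<bullet> y1 + (norm \<delta>)\<^sup>2 / \<beta>"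
        by (simp only: inner_add_right ih)
      show ?thesis using A B unfolding nh by linarith
    qed
    also have "\<beta> / 2 * ((norm \<delta>)\<^sup>2 / \<beta>\<^sup>2) = (norm \<delta>)\<^sup>2 / (2 * \<beta>)" using b by (simp add: power2_eq_square field_simps)
    finally show ?thesis by simp
  qed
  have nh2: "(norm ((- 1 / \<beta>) *\<^sub>R \<delta>))\<^sup>2 = (norm \<delta>)\<^sup>2 / \<beta>\<^sup>2" using b by (simp add: power_divide)
  have ih2: "\<delta> \<bullet> ((- 1 / \<beta>) *\<^sub>R \<delta>) = - (norm \<delta>)\<^sup>2 / \<beta>" by (simp add: power2_norm_eq_inner)
  have E2: "\<Phi>1 y1 \<le> \<Phi>2 y2 + \<delta> \<bullet> y2 - (norm \<delta>)\<^sup>2 / (2 * \<beta>)"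
  proof -
    have "\<Phi>1 y1 \<le> \<Phi>1 (y2 + (- 1 / \<beta>) *\<^sub>R \<delta>)" using m1 unfolding \<Phi>1_def by simp
    also have "\<dots> = \<Phi>2 (y2 + (- 1 / \<beta>) *\<^sub>R \<delta>) + \<delta> \<bullet> (y2 + (- 1 / \<beta>) *\<^sub>R \<delta>)" by (simp add: rel)
    also have "\<dots> \<le> \<Phi>2 y2 + \<beta> / 2 * ((norm \<delta>)\<^sup>2 / \<beta>\<^sup>2) + \<delta> \<bullet> y2 - (norm \<delta>)\<^sup>2 / \<beta>"
    proof -
      have A: "\<Phi>2 (y2 + (- 1 / \<beta>) *\<^sub>R \<delta>) \<le> \<Phi>2 y2 + \<beta> / 2 * (norm ((- 1 / \<beta>) *\<^sub>R \<delta>))\<^sup>2"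
        using M2[of "(- 1 / \<beta>) *\<^sub>R \<delta>"] by blast
      have B: "\<delta> \<bullet> (y2 + (- 1 / \<beta>) *\<^sub>R \<delta>) = \<delta> \<bullet> y2 + - (norm \<delta>)\<^sup>2 / \<beta>"
        by (simp only: inner_add_right ih2)
      show ?thesis using A B unfolding nh2 by linarith
    qed
    also have "\<beta> / 2 * ((norm \<delta>)\<^sup>2 / \<beta>\<^sup>2) = (norm \<delta>)\<^sup>2 / (2 * \<beta>)" using b by (simp add: power2_eq_square field_simps)
    finally show ?thesis by simp
  qed
  have "\<delta> \<bullet> (y1 - y2) \<le> - (norm \<delta>)\<^sup>2 / \<beta>"
    using E1 E2 b by (simp add: inner_diff_right field_simps)
  then show "(b1 - b2) \<bullet> (y1 - y2) \<le> - (norm (b1 - b2))\<^sup>2 / \<beta>" by (simp add: \<delta>_def)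
  have G1: "\<Phi>1 y1 + \<gamma> / 2 * (norm (y2 - y1))\<^sup>2 \<le> \<Phi>1 y2" using M1[of "y2 - y1"] by simp
  have G2: "\<Phi>2 y2 + \<gamma> / 2 * (norm (y1 - y2))\<^sup>2 \<le> \<Phi>2 y1" using M2[of "y1 - y2"] by simp
  have "norm (y2 - y1) = norm (y1 - y2)" by (rule norm_minus_commute)
  then show "\<gamma> * (norm (y1 - y2))\<^sup>2 \<le> - ((b1 - b2) \<bullet> (y1 - y2))"
    using G1 G2 unfolding \<Phi>1_def \<Phi>2_def by (simp add: inner_diff_left inner_diff_right algebra_simps)
qed

lemma W1_nonneg:
  shows "0 \<le> W1 \<mu> \<nu>"
proof -
  have "(\<lambda>_. 0::real) \<in> {g. 1-lipschitz_on UNIV g \<and> integrable \<mu> g \<and> integrable \<nu> g}"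
    using lipschitz_on_le[OF lipschitz_on_constant, of 1] by auto
  then have "ereal \<bar>(\<integral>z. (\<lambda>_. 0::real) z \<partial>\<mu>) - (\<integral>z. (\<lambda>_. 0::real) z \<partial>\<nu>)\<bar> \<le> W1 \<mu> \<nu>"
    unfolding W1_def by (rule SUP_upper)
  then show ?thesis by (simp add: zero_ereal_def)
qed

lemma W1_test:
  assumes "1-lipschitz_on UNIV g" "integrable \<mu> g" "integrable \<nu> g"
  shows "ereal \<bar>(\<integral>z. g z \<partial>\<mu>) - (\<integral>z. g z \<partial>\<nu>)\<bar> \<le> W1 \<mu> \<nu>"
  unfolding W1_def by (rule SUP_upper) (use assms in auto)

lemma W1_mean:
  fixes \<mu> \<nu> :: "('w::euclidean_space) measure"
  assumes "integrable \<mu> (\<lambda>w. w)" "integrable \<nu> (\<lambda>w. w)"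
    and W: "W1 \<mu> \<nu> \<le> ereal c"
  shows "norm ((\<integral>w. w \<partial>\<mu>) - (\<integral>w. w \<partial>\<nu>)) \<le> c"
proof (cases "(\<integral>w. w \<partial>\<mu>) - (\<integral>w. w \<partial>\<nu>) = 0")
  case True
  have "0 \<le> W1 \<mu> \<nu>" by (rule W1_nonneg)
  then have "0 \<le> c" using W by (metis ereal_less_eq(5) order_trans)
  then show ?thesis using True by simp
next
  case False
  define d where "d = (\<integral>w. w \<partial>\<mu>) - (\<integral>w. w \<partial>\<nu>)"
  define u where "u = (1 / norm d) *\<^sub>R d"
  have nu: "norm u = 1" using False by (simp add: u_def d_def)
  have lip: "1-lipschitz_on UNIV (\<lambda>w. u \<bullet> w)"
  proof (rule lipschitz_onI)
    fix x y :: 'w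
    have "dist (u \<bullet> x) (u \<bullet> y) = \<bar>u \<bullet> (x - y)\<bar>" by (simp add: dist_real_def inner_diff_right)
    also have "\<dots> \<le> norm u * norm (x - y)" by (rule Cauchy_Schwarz_ineq2)
    finally show "dist (u \<bullet> x) (u \<bullet> y) \<le> 1 * dist x y" using nu by (simp add: dist_norm)
  qed simp
  have "ereal \<bar>(\<integral>w. u \<bullet> w \<partial>\<mu>) - (\<integral>w. u \<bullet> w \<partial>\<nu>)\<bar> \<le> W1 \<mu> \<nu>"
    by (rule W1_test[OF lip]) (use assms in auto)
  moreover have "(\<integral>w. u \<bullet> w \<partial>\<mu>) - (\<integral>w. u \<bullet> w \<partial>\<nu>) = u \<bullet> d"
    using assms by (simp add: d_def inner_diff_right)
  moreover have "u \<bullet> d = norm d" using False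
    by (simp add: u_def d_def power2_norm_eq_inner[symmetric] power2_eq_square)
  ultimately have "ereal (norm d) \<le> ereal c" using W by (metis abs_norm_cancel order_trans)
  then show ?thesis by (simp add: d_def)
qed

lemma mcshane:
  fixes h :: "'a::metric_space \<Rightarrow> real"
  assumes ne: "Z \<noteq> {}" and lip: "\<And>z z'. z \<in> Z \<Longrightarrow> z' \<in> Z \<Longrightarrow> h z - h z' \<le> K * dist z z'" and K: "K \<ge> 0"
  shows "\<exists>H. K-lipschitz_on UNIV H \<and> (\<forall>z\<in>Z. H z = h z)"
proof -
  obtain w0 where w0: "w0 \<in> Z" using ne by blast
  define H where "H x = Inf ((\<lambda>w. h w + K * dist x w) ` Z)" for x
  have bdd: "bdd_below ((\<lambda>w. h w + K * dist x w) ` Z)" for x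
  proof (rule bdd_belowI2)
    fix w assume w: "w \<in> Z"
    have "h w0 - h w \<le> K * dist w0 w" by (rule lip[OF w0 w])
    also have "\<dots> \<le> K * (dist x w0 + dist x w)"
      using K dist_triangle3[of w0 w x] by (simp add: mult_left_mono dist_commute)
    finally show "h w0 - K * dist x w0 \<le> h w + K * dist x w" by (simp add: algebra_simps)
  qed
  have low: "H x \<le> h w + K * dist x w" if "w \<in> Z" for x w
    unfolding H_def by (rule cInf_lower[OF _ bdd]) (use that in auto)
  have grt: "c \<le> H x" if "\<And>w. w \<in> Z \<Longrightarrow> c \<le> h w + K * dist x w" for c x
    unfolding H_def by (rule cInf_greatest) (use ne that in auto)
  have onZ: "H z = h z" if z: "z \<in> Z" for z
  proof (rule antisym)
    show "H z \<le> h z" using low[OF z, of z] by simp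
    show "h z \<le> H z"
    proof (rule grt)
      fix w assume w: "w \<in> Z"
      show "h z \<le> h w + K * dist z w" using lip[OF z w] by simp
    qed
  qed
  have one: "H x - H y \<le> K * dist x y" for x y
  proof -
    have "H x - K * dist x y \<le> H y"
    proof (rule grt)
      fix w assume w: "w \<in> Z"
      have "H x \<le> h w + K * dist x w" by (rule low[OF w])
      also have "\<dots> \<le> h w + K * (dist x y + dist y w)"
        using K dist_triangle[of x w y] by (simp add: mult_left_mono)
      finally show "H x - K * dist x y \<le> h w + K * dist y w" by (simp add: algebra_simps)
    qed
    then show ?thesis by simp
  qed
  have "K-lipschitz_on UNIV H"
  proof (rule lipschitz_onI)
    fix x y :: 'a
    show "dist (H x) (H y) \<le> K * dist x y"
      using one[of x y] one[of y x] by (simp add: dist_real_def dist_commute abs_le_iff)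
  qed (rule K)
  then show ?thesis using onZ by blast
qed

lemma l_diff_lip:
  fixes l :: "real^'n \<Rightarrow> 'z::real_normed_vector \<Rightarrow> real"
  assumes grad: "\<And>x z. GDERIV (\<lambda>u. l u z) x :> gradl x z"
    and A2z: "\<And>x z z'. z \<in> Z \<Longrightarrow> z' \<in> Z \<Longrightarrow> norm (gradl x z - gradl x z') \<le> \<beta>z * norm (z - z')"
    and z: "z \<in> Z" and z': "z' \<in> Z"
  shows "(l x1 z - l x0 z) - (l x1 z' - l x0 z') \<le> (\<bar>\<beta>z\<bar> * norm (x1 - x0) + 1) * dist z z'"
proof -
  define d where "d = x1 - x0"
  define \<psi> where "\<psi> s = l (x0 + s *\<^sub>R d) z - l (x0 + s *\<^sub>R d) z'" for s
  have der: "DERIV \<psi> s :> (gradl (x0 + s *\<^sub>R d) z \<bullet> d - gradl (x0 + s *\<^sub>R d) z' \<bullet> d)" for s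
    unfolding \<psi>_def by (intro DERIV_diff line_deriv grad)
  obtain s where s: "0 < s" "s < 1" and eq: "\<psi> 1 - \<psi> 0 = (1 - 0) * (gradl (x0 + s *\<^sub>R d) z \<bullet> d - gradl (x0 + s *\<^sub>R d) z' \<bullet> d)"
    using MVT2[of 0 1 \<psi>, OF _ der] by auto
  have "gradl (x0 + s *\<^sub>R d) z \<bullet> d - gradl (x0 + s *\<^sub>R d) z' \<bullet> d = (gradl (x0 + s *\<^sub>R d) z - gradl (x0 + s *\<^sub>R d) z') \<bullet> d"
    by (simp add: inner_diff_left)
  also have "\<dots> \<le> norm (gradl (x0 + s *\<^sub>R d) z - gradl (x0 + s *\<^sub>R d) z') * norm d"
    by (rule order_trans[OF abs_ge_self Cauchy_Schwarz_ineq2])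
  also have "\<dots> \<le> (\<beta>z * norm (z - z')) * norm d"
    by (rule mult_right_mono[OF A2z[OF z z']]) simp
  also have "\<dots> \<le> (\<bar>\<beta>z\<bar> * norm d + 1) * dist z z'"
  proof -
    have "(\<beta>z * norm (z - z')) * norm d \<le> (\<bar>\<beta>z\<bar> * norm d) * norm (z - z')"
      by (simp add: mult_right_mono mult.commute mult.left_commute)
    also have "\<dots> \<le> (\<bar>\<beta>z\<bar> * norm d + 1) * norm (z - z')" by (simp add: mult_right_mono)
    finally show ?thesis by (simp add: dist_norm)
  qed
  finally show ?thesis using eq by (simp add: \<psi>_def d_def)
qed

lemma indep_eps0:
  fixes l :: "real^'n \<Rightarrow> real^'z \<Rightarrow> real"
  assumes Pa: "prob_space Ma" and Pb: "prob_space Mb"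
    and Sa: "sets Ma = sets borel" and Sb: "sets Mb = sets borel"
    and AEa: "AE z in Ma. z \<in> Z" and AEb: "AE z in Mb. z \<in> Z"
    and lint: "\<And>x. integrable Ma (l x)" "\<And>x. integrable Mb (l x)"
    and grad: "\<And>x z. GDERIV (\<lambda>u. l u z) x :> gradl x z"
    and A2z: "\<And>x z z'. z \<in> Z \<Longrightarrow> z' \<in> Z \<Longrightarrow> norm (gradl x z - gradl x z') \<le> \<beta>z * norm (z - z')"
    and W: "W1 Ma Mb \<le> ereal 0"
  shows "(\<integral>z. l x1 z \<partial>Ma) - (\<integral>z. l x0 z \<partial>Ma) = (\<integral>z. l x1 z \<partial>Mb) - (\<integral>z. l x0 z \<partial>Mb)"
proof -
  define K where "K = \<bar>\<beta>z\<bar> * norm (x1 - x0) + 1"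
  have K0: "K > 0" unfolding K_def by (simp add: add_nonneg_pos)
  define h where "h z = l x1 z - l x0 z" for z
  have ne: "Z \<noteq> {}"
  proof
    assume "Z = {}"
    then have "AE z in Ma. False" using AEa by simp
    then show False using prob_space.AE_False[OF Pa] by simp
  qed
  obtain H where H: "K-lipschitz_on UNIV H" and HZ: "\<forall>z\<in>Z. H z = h z"
    using mcshane[OF ne, of h K] l_diff_lip[OF grad A2z] K0 unfolding h_def K_def by fastforce
  define g where "g z = H z / K" for z
  have glip: "1-lipschitz_on UNIV g"
  proof (rule lipschitz_onI)
    fix x y :: "real^'z"
    have "dist (H x) (H y) \<le> K * dist x y" using lipschitz_onD[OF H] by simp
    then show "dist (g x) (g y) \<le> 1 * dist x y"
      using K0 by (simp add: g_def dist_real_def diff_divide_distrib[symmetric] abs_div pos_divide_le_eq mult.commute)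
  qed simp
  have Hb: "H \<in> borel_measurable borel"
    by (rule borel_measurable_continuous_onI[OF lipschitz_on_continuous_on[OF H]])
  have gen: "integrable M g \<and> (\<integral>z. g z \<partial>M) = ((\<integral>z. l x1 z \<partial>M) - (\<integral>z. l x0 z \<partial>M)) / K"
    if S: "sets M = sets borel" and AE: "AE z in M. z \<in> Z" and li: "\<And>x. integrable M (l x)" for M :: "(real^'z) measure"
  proof -
    have HM: "H \<in> borel_measurable M" unfolding measurable_cong_sets[OF S refl] by (rule Hb)
    have hint: "integrable M h" unfolding h_def using li by (intro Bochner_Integration.integrable_diff)
    have AEeq: "AE z in M. h z = H z" using AE by (rule AE_mp) (use HZ in auto)
    have Hint: "integrable M H" by (rule integrable_cong_AE_imp[OF hint HM AEeq])
    have "(\<integral>z. H z \<partial>M) = (\<integral>z. h z \<partial>M)"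
      by (rule integral_cong_AE[OF HM borel_measurable_integrable[OF hint]]) (use AEeq in \<open>auto elim: AE_mp\<close>)
    also have "\<dots> = (\<integral>z. l x1 z \<partial>M) - (\<integral>z. l x0 z \<partial>M)" unfolding h_def using li by simp
    finally show ?thesis using Hint unfolding g_def by simp
  qed
  have "ereal \<bar>(\<integral>z. g z \<partial>Ma) - (\<integral>z. g z \<partial>Mb)\<bar> \<le> W1 Ma Mb"
    by (rule W1_test[OF glip]) (use gen[OF Sa AEa lint(1)] gen[OF Sb AEb lint(2)] in auto)
  then have "\<bar>(\<integral>z. g z \<partial>Ma) - (\<integral>z. g z \<partial>Mb)\<bar> \<le> 0" using W by (metis ereal_less_eq(3) order_trans)
  then have "(\<integral>z. g z \<partial>Ma) = (\<integral>z. g z \<partial>Mb)" by simp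
  then show ?thesis using gen[OF Sa AEa lint(1)] gen[OF Sb AEb lint(2)] K0 by simp
qed

lemma norm_expand3:
  fixes D u e :: "'a::real_inner"
  shows "(norm (D + \<eta> *\<^sub>R u - \<eta> *\<^sub>R e))\<^sup>2 = (norm D)\<^sup>2 + \<eta>\<^sup>2 * (norm u)\<^sup>2 + \<eta>\<^sup>2 * (norm e)\<^sup>2
     + 2 * \<eta> * (D \<bullet> u) - 2 * \<eta> * (D \<bullet> e) - 2 * \<eta>\<^sup>2 * (u \<bullet> e)"
  by (simp only: power2_norm_eq_inner) (simp add: inner_add_left inner_add_right inner_diff_left inner_diff_right
      inner_commute algebra_simps power2_eq_square)

lemma norm_expand2:
  fixes D u :: "'a::real_inner"
  shows "(norm (D + \<eta> *\<^sub>R u))\<^sup>2 = (norm D)\<^sup>2 + \<eta>\<^sup>2 * (norm u)\<^sup>2 + 2 * \<eta> * (D \<bullet> u)"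
  by (simp only: power2_norm_eq_inner) (simp add: inner_add_left inner_add_right
      inner_commute algebra_simps power2_eq_square)

lemma two_mul_le: "2 * a * b \<le> a\<^sup>2 + (b::real)\<^sup>2"
  using sum_squares_ge_zero[of "a - b" 0] by (simp add: power2_eq_square algebra_simps)

lemma step_arith:
  fixes D u e :: "'a::real_inner"
  assumes P1: "D \<bullet> u \<le> - \<gamma>d * (norm D)\<^sup>2"
    and P2: "\<gamma> * r\<^sup>2 \<le> - (D \<bullet> u)"
    and P3: "norm u \<le> \<sigma> * r"
    and P4: "norm e \<le> \<epsilon>g * r"
    and r0: "r \<ge> 0"
    and g0: "\<gamma> > 0" and s0: "\<sigma> \<ge> 0" and e0: "\<epsilon>g \<ge> 0" and eta: "\<eta> > 0"
    and gdLd: "\<gamma>d \<le> Ld"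
    and Ld_def: "Ld = \<sigma>\<^sup>2 / \<gamma>"
    and \<kappa>3_def: "\<kappa>3 = 1 - 2 * \<eta> * \<gamma>d + \<eta>\<^sup>2 * Ld\<^sup>2 + \<epsilon>g * \<eta> + \<epsilon>g * Ld * \<eta>\<^sup>2
        + \<sigma>\<^sup>2 / \<gamma>\<^sup>2 * (\<epsilon>g\<^sup>2 * \<eta>\<^sup>2 + \<epsilon>g * \<eta> + \<epsilon>g * Ld * \<eta>\<^sup>2)"
    and cond1: "\<epsilon>g * (1 + \<sigma>\<^sup>2 / \<gamma>\<^sup>2) < 2 * \<gamma>d"
    and cond2: "\<eta> < (2 * \<gamma>d - \<epsilon>g * (1 + \<sigma>\<^sup>2 / \<gamma>\<^sup>2)) /
        (Ld\<^sup>2 + \<epsilon>g * Ld + \<epsilon>g\<^sup>2 * \<sigma>\<^sup>2 / \<gamma>\<^sup>2 + \<epsilon>g\<^sup>2 * Ld * \<sigma>\<^sup>2 / \<gamma>\<^sup>2)"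
  shows "(norm (D + \<eta> *\<^sub>R u - \<eta> *\<^sub>R e))\<^sup>2 \<le> \<kappa>3 * (norm D)\<^sup>2"
    and "(norm (D + \<eta> *\<^sub>R u - \<eta> *\<^sub>R e))\<^sup>2 \<le> (norm D)\<^sup>2"
    and "r \<le> \<sigma> / \<gamma> * norm D"
    and "\<kappa>3 \<ge> 0"
proof -
  define A where "A = norm D"
  define k where "k = \<sigma> / \<gamma>"
  define U where "U = norm u"
  define E where "E = norm e"
  define P where "P = D \<bullet> u"
  have A0: "A \<ge> 0" "U \<ge> 0" "E \<ge> 0" unfolding A_def U_def E_def by simp_all
  have k0: "k \<ge> 0" unfolding k_def using g0 s0 by simp
  have k2: "k\<^sup>2 = \<sigma>\<^sup>2 / \<gamma>\<^sup>2" unfolding k_def by (simp add: power_divide)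
  have Ldk: "Ld = \<sigma> * k" unfolding Ld_def k_def by (simp add: power2_eq_square)
  have mP: "- P \<le> A * U" unfolding P_def A_def U_def
    using Cauchy_Schwarz_ineq2[of D u] by linarith
  have rk: "r \<le> k * A"
  proof (cases "r = 0")
    case True then show ?thesis using k0 A0 by simp
  next
    case False
    then have rp: "r > 0" using r0 by simp
    have "\<gamma> * r * r \<le> A * (\<sigma> * r)"
    proof -
      have "\<gamma> * r * r = \<gamma> * r\<^sup>2" by (simp add: power2_eq_square)
      also have "\<dots> \<le> - P" using P2 by (simp add: P_def)
      also have "\<dots> \<le> A * U" by (rule mP)
      also have "\<dots> \<le> A * (\<sigma> * r)" using P3 A0 by (simp add: U_def mult_left_mono)
      finally show ?thesis .
    qed
    then have "\<gamma> * r \<le> \<sigma> * A" using rp by (simp add: algebra_simps)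
    then show ?thesis using g0 by (simp add: k_def field_simps)
  qed
  then show "r \<le> \<sigma> / \<gamma> * norm D" by (simp add: k_def A_def)
  have UL: "U \<le> Ld * A"
  proof -
    have "U \<le> \<sigma> * r" using P3 by (simp add: U_def)
    also have "\<dots> \<le> \<sigma> * (k * A)" using rk s0 by (simp add: mult_left_mono)
    finally show ?thesis by (simp add: Ldk mult.assoc)
  qed
  have U2: "U\<^sup>2 \<le> Ld * (- P)"
  proof -
    have "U\<^sup>2 \<le> (\<sigma> * r)\<^sup>2" using P3 A0 by (simp add: U_def power_mono)
    also have "\<dots> = (\<sigma>\<^sup>2 / \<gamma>) * (\<gamma> * r\<^sup>2)" using g0 by (simp add: power_mult_distrib)
    also have "\<dots> \<le> (\<sigma>\<^sup>2 / \<gamma>) * (- P)"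
    proof (rule mult_left_mono)
      show "\<gamma> * r\<^sup>2 \<le> - P" using P2 by (simp add: P_def)
    qed (use g0 in simp)
    finally show ?thesis by (simp add: Ld_def)
  qed
  have Er: "E \<le> \<epsilon>g * r" using P4 by (simp add: E_def)
  have Ek: "E \<le> \<epsilon>g * k * A" using Er rk e0 by (metis mult_left_mono mult.assoc order_trans)
  have gd0: "\<gamma>d > 0"
  proof -
    have "0 \<le> \<epsilon>g * (1 + \<sigma>\<^sup>2 / \<gamma>\<^sup>2)" using e0 by simp
    then show ?thesis using cond1 by linarith
  qed
  have Ld0: "Ld > 0" using gd0 gdLd by linarith
  have Ar: "2 * A * r \<le> (1 + k\<^sup>2) * A\<^sup>2"
  proof -
    have "2 * A * r \<le> A\<^sup>2 + r\<^sup>2" by (rule two_mul_le)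
    also have "r\<^sup>2 \<le> (k * A)\<^sup>2" using rk r0 by (simp add: power_mono)
    finally show ?thesis by (simp add: power_mult_distrib algebra_simps)
  qed
  have expand: "(norm (D + \<eta> *\<^sub>R u - \<eta> *\<^sub>R e))\<^sup>2 = A\<^sup>2 + \<eta>\<^sup>2 * U\<^sup>2 + \<eta>\<^sup>2 * E\<^sup>2 + 2 * \<eta> * P
      - 2 * \<eta> * (D \<bullet> e) - 2 * \<eta>\<^sup>2 * (u \<bullet> e)"
    unfolding A_def U_def E_def P_def by (rule norm_expand3)
  have h1: "\<eta>\<^sup>2 * U\<^sup>2 \<le> \<eta>\<^sup>2 * (Ld\<^sup>2 * A\<^sup>2)"
  proof -
    have "U\<^sup>2 \<le> (Ld * A)\<^sup>2" using UL A0 by (simp add: power_mono)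
    then show ?thesis by (simp add: power_mult_distrib mult_left_mono)
  qed
  have h2: "2 * \<eta> * P \<le> 2 * \<eta> * (- \<gamma>d * A\<^sup>2)"
    by (rule mult_left_mono) (use P1 eta in \<open>simp_all add: P_def A_def\<close>)
  have h3: "- 2 * \<eta> * (D \<bullet> e) \<le> \<eta> * \<epsilon>g * ((1 + k\<^sup>2) * A\<^sup>2)"
  proof -
    have "- (D \<bullet> e) \<le> A * E" unfolding A_def E_def using Cauchy_Schwarz_ineq2[of D e] by linarith
    also have "\<dots> \<le> A * (\<epsilon>g * r)" using Er A0 by (simp add: mult_left_mono)
    finally have "- 2 * (D \<bullet> e) \<le> \<epsilon>g * (2 * A * r)" by (simp add: algebra_simps)
    also have "\<dots> \<le> \<epsilon>g * ((1 + k\<^sup>2) * A\<^sup>2)" using Ar e0 by (simp add: mult_left_mono)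
    finally have X: "- 2 * (D \<bullet> e) \<le> \<epsilon>g * ((1 + k\<^sup>2) * A\<^sup>2)" .
    have "\<eta> * (- 2 * (D \<bullet> e)) \<le> \<eta> * (\<epsilon>g * ((1 + k\<^sup>2) * A\<^sup>2))"
      by (rule mult_left_mono[OF X]) (use eta in simp)
    then show ?thesis by (simp add: algebra_simps)
  qed
  have h4: "- 2 * \<eta>\<^sup>2 * (u \<bullet> e) \<le> \<eta>\<^sup>2 * (\<epsilon>g * Ld * ((1 + k\<^sup>2) * A\<^sup>2))"
  proof -
    have "- (u \<bullet> e) \<le> U * E" unfolding U_def E_def using Cauchy_Schwarz_ineq2[of u e] by linarith
    also have "\<dots> \<le> (Ld * A) * (\<epsilon>g * r)" using UL Er A0 e0 r0 by (simp add: mult_mono)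
    finally have "- 2 * (u \<bullet> e) \<le> \<epsilon>g * Ld * (2 * A * r)" by (simp add: algebra_simps)
    also have "\<dots> \<le> \<epsilon>g * Ld * ((1 + k\<^sup>2) * A\<^sup>2)" using Ar e0 Ld0 by (simp add: mult_left_mono)
    finally have X: "- 2 * (u \<bullet> e) \<le> \<epsilon>g * Ld * ((1 + k\<^sup>2) * A\<^sup>2)" .
    have "\<eta>\<^sup>2 * (- 2 * (u \<bullet> e)) \<le> \<eta>\<^sup>2 * (\<epsilon>g * Ld * ((1 + k\<^sup>2) * A\<^sup>2))"
      by (rule mult_left_mono[OF X]) simp
    then show ?thesis by (simp add: algebra_simps)
  qed
  have h5: "\<eta>\<^sup>2 * E\<^sup>2 \<le> \<eta>\<^sup>2 * (\<epsilon>g\<^sup>2 * k\<^sup>2 * A\<^sup>2)"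
  proof -
    have "E\<^sup>2 \<le> (\<epsilon>g * k * A)\<^sup>2" using Ek A0 by (simp add: power_mono)
    then show ?thesis by (simp add: power_mult_distrib mult_left_mono)
  qed
  have "(norm (D + \<eta> *\<^sub>R u - \<eta> *\<^sub>R e))\<^sup>2 \<le> A\<^sup>2 + \<eta>\<^sup>2 * (Ld\<^sup>2 * A\<^sup>2) + \<eta>\<^sup>2 * (\<epsilon>g\<^sup>2 * k\<^sup>2 * A\<^sup>2)
      + 2 * \<eta> * (- \<gamma>d * A\<^sup>2) + \<eta> * \<epsilon>g * ((1 + k\<^sup>2) * A\<^sup>2) + \<eta>\<^sup>2 * (\<epsilon>g * Ld * ((1 + k\<^sup>2) * A\<^sup>2))"
    unfolding expand using h1 h2 h3 h4 h5 by linarith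
  also have "\<dots> = \<kappa>3 * A\<^sup>2" unfolding \<kappa>3_def k2[symmetric] by (simp add: algebra_simps)
  finally show "(norm (D + \<eta> *\<^sub>R u - \<eta> *\<^sub>R e))\<^sup>2 \<le> \<kappa>3 * (norm D)\<^sup>2" by (simp add: A_def)
  show "\<kappa>3 \<ge> 0"
  proof -
    have "0 \<le> (1 - \<eta> * Ld)\<^sup>2" by simp
    also have "\<dots> \<le> 1 - 2 * \<eta> * \<gamma>d + \<eta>\<^sup>2 * Ld\<^sup>2"
      using gdLd eta by (simp add: power2_eq_square algebra_simps)
    also have "\<dots> \<le> \<kappa>3" unfolding \<kappa>3_def using e0 eta Ld0 g0
      by (simp add: add_nonneg_nonneg mult_nonneg_nonneg)
    finally show ?thesis .
  qed
  define w where "w = \<epsilon>g * k"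
  define N where "N = 2 * \<gamma>d - \<epsilon>g * (1 + k\<^sup>2)"
  define Den where "Den = Ld\<^sup>2 + \<epsilon>g * Ld + \<epsilon>g\<^sup>2 * k\<^sup>2 + \<epsilon>g\<^sup>2 * Ld * k\<^sup>2"
  have w0: "w \<ge> 0" using e0 k0 by (simp add: w_def)
  have s1: "2 * w \<le> \<epsilon>g * (1 + k\<^sup>2)"
  proof -
    have "2 * 1 * k \<le> 1\<^sup>2 + k\<^sup>2" by (rule two_mul_le)
    then have "\<epsilon>g * (2 * k) \<le> \<epsilon>g * (1 + k\<^sup>2)" using e0 by (intro mult_left_mono) simp_all
    then show ?thesis unfolding w_def by (simp add: algebra_simps)
  qed
  have N0: "N > 0" using cond1 unfolding N_def k2 by simp
  have Nw: "N \<le> 2 * \<gamma>d - 2 * w" using s1 by (simp add: N_def)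
  have Den0: "Den \<ge> Ld\<^sup>2 + w\<^sup>2"
  proof -
    have "0 \<le> \<epsilon>g * Ld" using e0 Ld0 by simp
    moreover have "0 \<le> \<epsilon>g\<^sup>2 * Ld * k\<^sup>2" using Ld0 by simp
    ultimately show ?thesis by (simp add: Den_def w_def power_mult_distrib)
  qed
  have Ld2: "Ld\<^sup>2 \<le> Den" using Den0 zero_le_power2[of w] by linarith
  have "Ld\<^sup>2 > 0" using Ld0 by simp
  then have Denp: "Den > 0" using Ld2 by linarith
  have etaDen: "\<eta> * Den < N"
  proof -
    have "\<eta> < N / Den" using cond2 unfolding N_def Den_def k2
      by (simp add: mult.assoc times_divide_eq_right)
    then show ?thesis using Denp by (simp add: pos_less_divide_eq mult.commute)
  qed
  have s4: "\<eta> * Ld \<le> 2"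
  proof -
    have "\<eta> * Ld\<^sup>2 \<le> \<eta> * Den" using Ld2 eta by (simp add: mult_left_mono)
    also have "\<dots> < N" by (rule etaDen)
    also have "\<dots> \<le> 2 * Ld" using Nw w0 gdLd by linarith
    finally have "(\<eta> * Ld) * Ld < 2 * Ld" by (simp add: power2_eq_square mult.assoc)
    then show ?thesis using Ld0 by simp
  qed
  have s5: "\<eta> * w \<le> 1"
  proof -
    have "\<eta> * (Ld\<^sup>2 + w\<^sup>2) \<le> \<eta> * Den" using Den0 eta by (simp add: mult_left_mono)
    also have "\<dots> < N" by (rule etaDen)
    also have "\<dots> \<le> 2 * (Ld - w)" using Nw gdLd by (simp add: algebra_simps)
    finally have a: "\<eta> * (Ld\<^sup>2 + w\<^sup>2) \<le> 2 * (Ld - w)" by simp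
    have "w * (\<eta> * (Ld\<^sup>2 + w\<^sup>2)) \<le> w * (2 * (Ld - w))" using a w0 by (rule mult_left_mono)
    also have "\<dots> = 2 * Ld * w - 2 * w\<^sup>2" by (simp add: algebra_simps power2_eq_square)
    also have "\<dots> \<le> Ld\<^sup>2 + w\<^sup>2" using two_mul_le[of Ld w] zero_le_power2[of w] by linarith
    finally have "(\<eta> * w) * (Ld\<^sup>2 + w\<^sup>2) \<le> 1 * (Ld\<^sup>2 + w\<^sup>2)" by (simp add: algebra_simps)
    moreover have "Ld\<^sup>2 + w\<^sup>2 > 0" using Ld0 by (simp add: add_pos_nonneg)
    ultimately show ?thesis by simp
  qed
  have s6: "1 - \<eta> * \<gamma>d * (2 - \<eta> * Ld) \<le> (1 - \<eta> * w)\<^sup>2"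
  proof -
    have "\<gamma>d * Ld \<le> Ld * Ld" using gdLd Ld0 by (simp add: mult_right_mono)
    then have "\<gamma>d * Ld - w\<^sup>2 \<le> Den" using Ld2 zero_le_power2[of w] unfolding power2_eq_square by linarith
    then have "\<eta> * (\<gamma>d * Ld - w\<^sup>2) \<le> \<eta> * Den" using eta by (simp add: mult_left_mono)
    also have "\<dots> < N" by (rule etaDen)
    also have "\<dots> \<le> 2 * (\<gamma>d - w)" using Nw by (simp add: algebra_simps)
    finally have "\<eta> * (\<eta> * (\<gamma>d * Ld - w\<^sup>2)) \<le> \<eta> * (2 * (\<gamma>d - w))" using eta by simp
    then show ?thesis by (simp add: power2_eq_square algebra_simps)
  qed
  have ne1: "(norm (D + \<eta> *\<^sub>R u))\<^sup>2 \<le> ((1 - \<eta> * w) * A)\<^sup>2"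
  proof -
    have "(norm (D + \<eta> *\<^sub>R u))\<^sup>2 = A\<^sup>2 + \<eta>\<^sup>2 * U\<^sup>2 + 2 * \<eta> * P"
      unfolding A_def U_def P_def by (rule norm_expand2)
    also have "\<eta>\<^sup>2 * U\<^sup>2 \<le> \<eta>\<^sup>2 * (Ld * (- P))" by (rule mult_left_mono[OF U2]) simp
    finally have "(norm (D + \<eta> *\<^sub>R u))\<^sup>2 \<le> A\<^sup>2 + \<eta> * (2 - \<eta> * Ld) * P"
      by (simp add: power2_eq_square algebra_simps)
    also have "\<eta> * (2 - \<eta> * Ld) * P \<le> \<eta> * (2 - \<eta> * Ld) * (- \<gamma>d * A\<^sup>2)"
    proof (rule mult_left_mono)
      show "P \<le> - \<gamma>d * A\<^sup>2" using P1 by (simp add: P_def A_def)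
      show "0 \<le> \<eta> * (2 - \<eta> * Ld)" using s4 eta by (intro mult_nonneg_nonneg) auto
    qed
    finally have "(norm (D + \<eta> *\<^sub>R u))\<^sup>2 \<le> (1 - \<eta> * \<gamma>d * (2 - \<eta> * Ld)) * A\<^sup>2"
      by (simp add: algebra_simps)
    also have "\<dots> \<le> (1 - \<eta> * w)\<^sup>2 * A\<^sup>2" using s6 by (simp add: mult_right_mono)
    finally show ?thesis by (simp add: power_mult_distrib)
  qed
  have ne2: "norm (D + \<eta> *\<^sub>R u) \<le> (1 - \<eta> * w) * A"
    by (rule power2_le_imp_le[OF ne1]) (use s5 A0 in simp)
  have "norm (D + \<eta> *\<^sub>R u - \<eta> *\<^sub>R e) \<le> norm (D + \<eta> *\<^sub>R u) + norm (\<eta> *\<^sub>R e)"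
    by (rule norm_triangle_ineq4)
  also have "norm (\<eta> *\<^sub>R e) \<le> \<eta> * (w * A)"
  proof -
    have "norm (\<eta> *\<^sub>R e) = \<eta> * E" using eta by (simp add: E_def)
    also have "\<dots> \<le> \<eta> * (w * A)" by (rule mult_left_mono) (use Ek eta in \<open>simp_all add: w_def\<close>)
    finally show ?thesis .
  qed
  finally have "norm (D + \<eta> *\<^sub>R u - \<eta> *\<^sub>R e) \<le> (1 - \<eta> * w) * A + \<eta> * (w * A)"
    using ne2 by linarith
  then have "norm (D + \<eta> *\<^sub>R u - \<eta> *\<^sub>R e) \<le> A" by (simp add: algebra_simps)
  then show "(norm (D + \<eta> *\<^sub>R u - \<eta> *\<^sub>R e))\<^sup>2 \<le> (norm D)\<^sup>2"
    unfolding A_def by (rule power_mono) simp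
qed

lemma le_eps:
  fixes c K a :: real
  assumes h: "\<And>s. 0 < s \<Longrightarrow> s \<le> a \<Longrightarrow> c \<le> K * s" and a: "0 < a"
  shows "c \<le> 0"
proof (rule ccontr)
  assume "\<not> c \<le> 0"
  then have c: "c > 0" by simp
  define s where "s = min a (c / (\<bar>K\<bar> + 1))"
  have s0: "0 < s" using a c by (simp add: s_def)
  have sa: "s \<le> a" by (simp add: s_def)
  have "K * s \<le> \<bar>K\<bar> * s" using s0 by (simp add: mult_right_mono)
  also have "\<dots> \<le> \<bar>K\<bar> * (c / (\<bar>K\<bar> + 1))" by (rule mult_left_mono) (simp_all add: s_def)
  also have "\<dots> < c" using c by (simp add: field_simps)
  finally show False using h[OF s0 sa] by simp
qed

lemma pos_part_nonexp: "norm (pos_part a - pos_part b) \<le> norm (a - b)"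
proof -
  have "(pos_part a - pos_part b) \<bullet> (pos_part a - pos_part b) \<le> (a - b) \<bullet> (a - b)"
    unfolding inner_vec_def
  proof (rule sum_mono)
    fix i
    have "\<bar>max (a $ i) 0 - max (b $ i) 0\<bar> \<le> \<bar>a $ i - b $ i\<bar>" by (simp add: max_def abs_if)
    then have "(max (a $ i) 0 - max (b $ i) 0)\<^sup>2 \<le> (a $ i - b $ i)\<^sup>2" by (simp only: abs_le_square_iff)
    then show "(pos_part a - pos_part b) $ i \<bullet> (pos_part a - pos_part b) $ i \<le> (a - b) $ i \<bullet> (a - b) $ i"
      by (simp add: pos_part_def power2_eq_square)
  qed
  then show ?thesis by (simp add: norm_le)
qed

theorem corollary2:
  fixes G :: "real^'n^'w"
    and l :: "real^'n \<Rightarrow> real^'z \<Rightarrow> real"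
    and gradl :: "real^'n \<Rightarrow> real^'z \<Rightarrow> real^'n"
    and Z :: "(real^'z) set" and W :: "(real^'w) set"
    and D :: "real^'n \<Rightarrow> (real^'z) measure"
    and Dg :: "real^'n \<Rightarrow> (real^'w) measure"
    and f :: "real^'n \<Rightarrow> real^'n \<Rightarrow> real"
    and \<xi> :: "real^'n \<Rightarrow> real^'w"
    and Lag :: "real^'n \<Rightarrow> real^'n \<Rightarrow> real^'w \<Rightarrow> real"
    and d :: "real^'n \<Rightarrow> real^'w \<Rightarrow> real"
    and \<gamma> \<beta>x \<beta>z \<epsilon> \<epsilon>g \<eta> \<gamma>d Ld \<kappa>3 :: real
    and x ybar :: "nat \<Rightarrow> real^'n" and lam :: "nat \<Rightarrow> real^'w"
    and xs :: "real^'n" and lams :: "real^'w"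
  assumes C2: "C2 (\<lambda>p :: (real^'n) \<times> (real^'z). l (fst p) (snd p))"
    and grad: "\<And>x z. GDERIV (\<lambda>u. l u z) x :> gradl x z"
    and D_prob: "\<And>x. prob_space (D x)" "\<And>x. sets (D x) = sets borel"
      "\<And>x. AE z in D x. z \<in> Z"
    and Dg_prob: "\<And>x. prob_space (Dg x)" "\<And>x. sets (Dg x) = sets borel"
      "\<And>x. AE w in Dg x. w \<in> W"
    and l_int: "\<And>x x'. integrable (D x') (l x)"
    and w_int: "\<And>x'. integrable (Dg x') (\<lambda>w. w)"
    and f_def: "\<And>x' x. f x' x = (\<integral>z. l x z \<partial>D x')"
    and \<xi>_def: "\<And>x'. \<xi> x' = (\<integral>w. w \<partial>Dg x')"
    and Lag_def: "\<And>x' x v. Lag x' x v = f x' x + v \<bullet> (G *v x - \<xi> x')"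
    and d_def: "\<And>x' v. d x' v = (INF x. Lag x' x v)"
    and eps0: "\<epsilon> = 0"
    and A1: "\<gamma> > 0" "\<And>z. z \<in> Z \<Longrightarrow> strongly_convex \<gamma> (\<lambda>x. l x z)"
    and A2z: "\<And>x z z'. z \<in> Z \<Longrightarrow> z' \<in> Z \<Longrightarrow> norm (gradl x z - gradl x z') \<le> \<beta>z * norm (z - z')"
    and A2x: "\<And>x y z. z \<in> Z \<Longrightarrow> norm (gradl x z - gradl y z) \<le> \<beta>x * norm (x - y)"
    and A3: "\<And>x y. W1 (D x) (D y) \<le> ereal (\<epsilon> * norm (x - y))"
      "\<And>x y. W1 (Dg x) (Dg y) \<le> ereal (\<epsilon>g * norm (x - y))"
    and A4: "rank G = CARD('w)"
    and eq_feas: "G *v xs \<le> \<xi> xs"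
    and eq_opt: "\<And>x. G *v x \<le> \<xi> xs \<Longrightarrow> f xs xs \<le> f xs x"
    and lams_nonneg: "0 \<le> lams"
    and lams_opt: "\<And>v. 0 \<le> v \<Longrightarrow> d xs v \<le> d xs lams"
    and eta_pos: "\<eta> > 0"
    and rda_x: "\<And>t u. t \<ge> 1 \<Longrightarrow> Lag (x (t - 1)) (x t) (lam t) \<le> Lag (x (t - 1)) u (lam t)"
    and rda_y: "\<And>t u. t \<ge> 1 \<Longrightarrow> Lag (x t) (ybar t) (lam t) \<le> Lag (x t) u (lam t)"
    and rda_lam: "\<And>t. t \<ge> 1 \<Longrightarrow> lam (Suc t) = pos_part (lam t + \<eta> *\<^sub>R (G *v ybar t - \<xi> (x t)))"
    and \<gamma>d_def: "\<gamma>d = lambda_min (G ** transpose G) / \<beta>x"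
    and Ld_def: "Ld = (sigma_max G)\<^sup>2 / \<gamma>"
    and \<kappa>3_def: "\<kappa>3 = 1 - 2 * \<eta> * \<gamma>d + \<eta>\<^sup>2 * Ld\<^sup>2 + \<epsilon>g * \<eta> + \<epsilon>g * Ld * \<eta>\<^sup>2
        + (sigma_max G)\<^sup>2 / \<gamma>\<^sup>2 * (\<epsilon>g\<^sup>2 * \<eta>\<^sup>2 + \<epsilon>g * \<eta> + \<epsilon>g * Ld * \<eta>\<^sup>2)"
    and cond1: "\<epsilon>g * (1 + (sigma_max G)\<^sup>2 / \<gamma>\<^sup>2) < 2 * \<gamma>d"
    and cond2: "\<eta> < (2 * \<gamma>d - \<epsilon>g * (1 + (sigma_max G)\<^sup>2 / \<gamma>\<^sup>2)) /
        (Ld\<^sup>2 + \<epsilon>g * Ld + \<epsilon>g\<^sup>2 * (sigma_max G)\<^sup>2 / \<gamma>\<^sup>2 + \<epsilon>g\<^sup>2 * Ld * (sigma_max G)\<^sup>2 / \<gamma>\<^sup>2)"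
  shows "\<forall>t\<ge>1. (norm (lam (Suc t) - lams))\<^sup>2 \<le> \<kappa>3 ^ t * (norm (lam 1 - lams))\<^sup>2 \<and>
               (norm (x (Suc t) - xs))\<^sup>2 \<le> \<kappa>3 ^ (t - 1) * ((sigma_max G)\<^sup>2 / \<gamma>\<^sup>2) * (norm (lam 1 - lams))\<^sup>2"
proof -
  have \<gamma>0: "\<gamma> > 0" by (rule A1(1))
  define \<sigma> where "\<sigma> = sigma_max G"
  have \<sigma>0: "\<sigma> \<ge> 0" using sigma_max_bound(1)[of G] by (simp add: \<sigma>_def)
  have Gb: "\<And>y. norm (G *v y) \<le> \<sigma> * norm y" using sigma_max_bound(2)[of G] by (simp add: \<sigma>_def)
  have GTb: "\<And>v. norm (transpose G *v v) \<le> \<sigma> * norm v" using sigma_max_transpose[of G] by (simp add: \<sigma>_def)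
  define F0 where "F0 y = f xs y" for y
  define \<xi>s where "\<xi>s = \<xi> xs"
  obtain i0 :: 'n where True by simp
  have eg0: "\<epsilon>g \<ge> 0"
  proof -
    have "0 \<le> W1 (Dg 0) (Dg (axis i0 1))" by (rule W1_nonneg)
    also have "\<dots> \<le> ereal (\<epsilon>g * norm (0 - axis i0 (1::real)))" by (rule A3(2))
    finally show ?thesis by (simp add: zero_ereal_def norm_axis_1)
  qed
  have xi_lip: "\<And>y1 y2. norm (\<xi> y1 - \<xi> y2) \<le> \<epsilon>g * norm (y1 - y2)"
    unfolding \<xi>_def by (rule W1_mean[OF w_int w_int A3(2)])
  have indep: "f x' u = F0 u + (f x' 0 - F0 0)" for x' u
  proof -
    have W0: "W1 (D x') (D xs) \<le> ereal 0" using A3(1)[of x' xs] by (simp add: eps0)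
    have "(\<integral>z. l u z \<partial>D x') - (\<integral>z. l 0 z \<partial>D x') = (\<integral>z. l u z \<partial>D xs) - (\<integral>z. l 0 z \<partial>D xs)"
      by (rule indep_eps0[OF D_prob(1) D_prob(1) D_prob(2) D_prob(2) D_prob(3) D_prob(3) l_int l_int grad A2z W0])
    then show ?thesis by (simp add: F0_def f_def)
  qed
  have sw: "sandw \<gamma> \<beta>x F0"
    unfolding sandw_def F0_def f_def
    using sandwich_int[OF D_prob(1) D_prob(3) l_int grad A1(2) A2x] \<gamma>0 by simp
  have \<beta>pos: "\<beta>x \<ge> \<gamma>"
  proof -
    obtain y0 where y0: "\<forall>y. F0 y0 \<le> F0 y" using sandw_exists_min[OF sw \<gamma>0] by blast
    have "F0 y0 + \<gamma> / 2 * (norm (axis i0 (1::real)))\<^sup>2 \<le> F0 (y0 + axis i0 1) \<and>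
      F0 (y0 + axis i0 1) \<le> F0 y0 + \<beta>x / 2 * (norm (axis i0 (1::real)))\<^sup>2"
      by (rule sandw_min[OF sw]) (use y0 in blast)
    then show ?thesis by (simp add: norm_axis_1)
  qed
  have \<beta>0: "\<beta>x > 0" using \<beta>pos \<gamma>0 by linarith
  define ismin where "ismin b y \<longleftrightarrow> (\<forall>u. F0 y + b \<bullet> y \<le> F0 u + b \<bullet> u)" for b y
  have lagF: "Lag x' u v = F0 u + (transpose G *v v) \<bullet> u + (f x' 0 - F0 0 - v \<bullet> \<xi> x')" for x' u v
    by (simp add: Lag_def indep[of x' u] inner_diff_right dot_lmul_matrix)
  have lag_min: "ismin (transpose G *v v) y" if "\<And>u. Lag x' y v \<le> Lag x' u v" for x' y v
    unfolding ismin_def using that by (simp add: lagF)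
  have min_exists: "\<exists>y. ismin b y" for b
  proof -
    obtain y where "\<forall>u. F0 y + b \<bullet> y + 0 \<le> F0 u + b \<bullet> u + 0"
      using sandw_exists_min[OF sandw_lin[OF sw, of b 0] \<gamma>0] by blast
    then show ?thesis unfolding ismin_def by auto
  qed
  have min_low: "F0 y + b \<bullet> y + \<gamma> / 2 * (norm (u - y))\<^sup>2 \<le> F0 u + b \<bullet> u" if "ismin b y" for b y u
  proof -
    have "F0 y + b \<bullet> y + 0 + \<gamma> / 2 * (norm (u - y))\<^sup>2 \<le> F0 (y + (u - y)) + b \<bullet> (y + (u - y)) + 0"
      using sandw_min[OF sandw_lin[OF sw, of b 0], of y "u - y"] that unfolding ismin_def by simp
    then show ?thesis by simp
  qed
  have min_unique: "y1 = y2" if "ismin b y1" "ismin b y2" for b y1 y2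
  proof -
    have "F0 y1 + b \<bullet> y1 + \<gamma> / 2 * (norm (y2 - y1))\<^sup>2 \<le> F0 y2 + b \<bullet> y2" by (rule min_low[OF that(1)])
    moreover have "F0 y2 + b \<bullet> y2 \<le> F0 y1 + b \<bullet> y1" using that(2) unfolding ismin_def by blast
    ultimately have "\<gamma> / 2 * (norm (y2 - y1))\<^sup>2 \<le> 0" by linarith
    then have "(norm (y2 - y1))\<^sup>2 \<le> 0" using \<gamma>0 by (simp add: mult_le_0_iff)
    then show ?thesis by simp
  qed
  have mono: "(b1 - b2) \<bullet> (y1 - y2) \<le> - (norm (b1 - b2))\<^sup>2 / \<beta>x \<and> \<gamma> * (norm (y1 - y2))\<^sup>2 \<le> - ((b1 - b2) \<bullet> (y1 - y2))"
    if "ismin b1 y1" "ismin b2 y2" for b1 b2 y1 y2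
    using minimizer_mono[OF sw \<beta>0, of y1 b1 y2 b2] that unfolding ismin_def by blast
  have GT_diff: "transpose G *v v1 - transpose G *v v2 = transpose G *v (v1 - v2)" for v1 v2
    by (simp only: matrix_vector_mult_diff_distrib)
  have kid: "(transpose G *v v1 - transpose G *v v2) \<bullet> y = (v1 - v2) \<bullet> (G *v y)" for v1 v2 y
    by (simp only: GT_diff transpose_inner)
  have min_lip: "norm (y1 - y2) \<le> \<sigma> / \<gamma> * norm (v1 - v2)"
    if "ismin (transpose G *v v1) y1" "ismin (transpose G *v v2) y2" for v1 v2 y1 y2
  proof -
    have "\<gamma> * (norm (y1 - y2))\<^sup>2 \<le> - ((v1 - v2) \<bullet> (G *v (y1 - y2)))"
      using conjunct2[OF mono[OF that]] unfolding kid .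
    also have "\<dots> \<le> norm (v1 - v2) * norm (G *v (y1 - y2))"
      using Cauchy_Schwarz_ineq2[of "v1 - v2" "G *v (y1 - y2)"] by linarith
    also have "\<dots> \<le> norm (v1 - v2) * (\<sigma> * norm (y1 - y2))" by (rule mult_left_mono[OF Gb]) simp
    finally have *: "(\<gamma> * norm (y1 - y2)) * norm (y1 - y2) \<le> (\<sigma> * norm (v1 - v2)) * norm (y1 - y2)"
      by (simp add: power2_eq_square algebra_simps)
    show ?thesis
    proof (cases "norm (y1 - y2) = 0")
      case True then show ?thesis using \<sigma>0 \<gamma>0 by simp
    next
      case False
      then have "\<gamma> * norm (y1 - y2) \<le> \<sigma> * norm (v1 - v2)" using * by simp
      then show ?thesis using \<gamma>0 by (simp add: field_simps)
    qed
  qed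
  define ymin where "ymin v = (SOME y. ismin (transpose G *v v) y)" for v
  have ymin: "ismin (transpose G *v v) (ymin v)" for v
    unfolding ymin_def by (rule someI_ex[OF min_exists])
  have lagxs: "Lag xs u v = F0 u + (transpose G *v v) \<bullet> u - v \<bullet> \<xi>s" for u v
    using lagF[of xs u v] by (simp add: F0_def \<xi>s_def)
  have lagxs2: "Lag xs u v = F0 u + v \<bullet> (G *v u - \<xi>s)" for u v
    by (simp add: Lag_def F0_def \<xi>s_def)
  have dval: "d xs v = Lag xs (ymin v) v" for v
  proof -
    have "\<forall>u. Lag xs (ymin v) v \<le> Lag xs u v"
      using ymin[of v] unfolding ismin_def lagxs by simp
    then show ?thesis unfolding d_def by (intro cInf_eq_minimum) auto
  qed
  define ystar where "ystar = ymin lams"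
  define r where "r y i = (G *v y - \<xi>s) $ i" for y i
  have pert: "s * r (ymin (lams + s *\<^sub>R axis i 1)) i \<le> 0 \<and>
      \<bar>r ystar i - r (ymin (lams + s *\<^sub>R axis i 1)) i\<bar> \<le> \<sigma> * (\<sigma> / \<gamma>) * \<bar>s\<bar>"
    if nn: "0 \<le> lams + s *\<^sub>R axis i 1" for s i
  proof -
    define v where "v = lams + s *\<^sub>R axis i 1"
    have sh: "Lag xs y v = Lag xs y lams + s * r y i" for y
      unfolding lagxs2 v_def r_def by (simp add: inner_add_left inner_axis')
    have "d xs v \<le> d xs lams" using lams_opt nn by (simp add: v_def)
    moreover have "d xs v = Lag xs (ymin v) lams + s * r (ymin v) i" using dval sh by simp
    moreover have "d xs lams \<le> Lag xs (ymin v) lams"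
    proof -
      have "Lag xs ystar lams \<le> Lag xs (ymin v) lams"
        using ymin[of lams] unfolding ismin_def lagxs ystar_def by simp
      then show ?thesis using dval[of lams] ystar_def by simp
    qed
    ultimately have 1: "s * r (ymin v) i \<le> 0" by linarith
    have "\<bar>r ystar i - r (ymin v) i\<bar> = \<bar>(G *v (ystar - ymin v)) $ i\<bar>"
      by (simp add: r_def matrix_vector_mult_diff_distrib)
    also have "\<dots> \<le> norm (G *v (ystar - ymin v))" by (rule component_le_norm_cart)
    also have "\<dots> \<le> \<sigma> * norm (ystar - ymin v)" by (rule Gb)
    also have "\<dots> \<le> \<sigma> * (\<sigma> / \<gamma> * norm (lams - v))"
      by (rule mult_left_mono[OF min_lip[OF ymin[of lams] ymin[of v], folded ystar_def] \<sigma>0])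
    also have "norm (lams - v) = \<bar>s\<bar>" by (simp add: v_def norm_axis_1)
    finally show ?thesis using 1 by (simp add: v_def mult.assoc)
  qed
  have nonneg_pert: "0 \<le> lams + s *\<^sub>R axis i 1" if "0 \<le> lams $ i + s" for s i
    using lams_nonneg that unfolding less_eq_vec_def by (auto simp: axis_def)
  have feas: "r ystar i \<le> 0" for i
  proof (rule le_eps[where a=1 and K="\<sigma> * (\<sigma> / \<gamma>)"])
    fix s :: real assume s: "0 < s" "s \<le> 1"
    have nn: "0 \<le> lams + s *\<^sub>R axis i 1"
      using lams_nonneg s by (intro nonneg_pert) (auto simp: less_eq_vec_def)
    from pert[OF nn] s have "r (ymin (lams + s *\<^sub>R axis i 1)) i \<le> 0" by (simp add: mult_le_0_iff)
    with pert[OF nn] s show "r ystar i \<le> \<sigma> * (\<sigma> / \<gamma>) * s" by (simp add: abs_le_iff)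
  qed simp
  have csl: "r ystar i = 0" if pos: "lams $ i > 0" for i
  proof -
    have "- r ystar i \<le> 0"
    proof (rule le_eps[where a="lams $ i" and K="\<sigma> * (\<sigma> / \<gamma>)"])
      fix s :: real assume s: "0 < s" "s \<le> lams $ i"
      have nn: "0 \<le> lams + (- s) *\<^sub>R axis i 1" using s by (intro nonneg_pert) simp
      from pert[OF nn] s have "0 \<le> r (ymin (lams + (- s) *\<^sub>R axis i 1)) i" by (auto simp add: zero_le_mult_iff)
      with pert[OF nn] s show "- r ystar i \<le> \<sigma> * (\<sigma> / \<gamma>) * s" by (simp add: abs_le_iff)
    qed (rule pos)
    then show ?thesis using feas[of i] by simp
  qed
  have lams_r: "lams \<bullet> (G *v ystar - \<xi>s) = 0"
    unfolding inner_vec_def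
  proof (rule sum.neutral, intro ballI)
    fix i
    have "lams $ i \<ge> 0" using lams_nonneg by (simp add: less_eq_vec_def)
    then show "lams $ i \<bullet> (G *v ystar - \<xi>s) $ i = 0" using csl[of i] by (cases "lams $ i = 0") (auto simp: r_def)
  qed
  have ystar_feas: "G *v ystar \<le> \<xi> xs"
    using feas unfolding less_eq_vec_def r_def \<xi>s_def by simp
  have xs_eq: "xs = ystar"
  proof -
    have "Lag xs xs lams \<le> F0 xs"
    proof -
      have "lams \<bullet> (G *v xs - \<xi>s) \<le> 0"
        unfolding inner_vec_def inner_real_def
      proof (rule sum_nonpos)
        fix i
        have "lams $ i \<ge> 0" using lams_nonneg by (simp add: less_eq_vec_def)
        moreover have "(G *v xs - \<xi>s) $ i \<le> 0" using eq_feas by (simp add: less_eq_vec_def \<xi>s_def)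
        ultimately show "lams $ i * (G *v xs - \<xi>s) $ i \<le> 0" by (simp add: mult_nonneg_nonpos)
      qed
      then show ?thesis by (simp add: lagxs2)
    qed
    also have "F0 xs \<le> F0 ystar" unfolding F0_def by (rule eq_opt[OF ystar_feas])
    also have "F0 ystar = Lag xs ystar lams" by (simp add: lagxs2 lams_r)
    finally have le: "F0 xs + (transpose G *v lams) \<bullet> xs \<le> F0 ystar + (transpose G *v lams) \<bullet> ystar"
      unfolding lagxs by simp
    have "F0 ystar + (transpose G *v lams) \<bullet> ystar + \<gamma> / 2 * (norm (xs - ystar))\<^sup>2 \<le> F0 xs + (transpose G *v lams) \<bullet> xs"
      by (rule min_low) (unfold ystar_def, rule ymin)
    with le have "\<gamma> / 2 * (norm (xs - ystar))\<^sup>2 \<le> 0" by linarith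
    then have "(norm (xs - ystar))\<^sup>2 \<le> 0" using \<gamma>0 by (simp add: mult_le_0_iff)
    then show ?thesis by simp
  qed
  have xs_min: "ismin (transpose G *v lams) xs" unfolding xs_eq ystar_def by (rule ymin)
  have fixpt: "pos_part (lams + \<eta> *\<^sub>R (G *v xs - \<xi> xs)) = lams"
  proof (subst vec_eq_iff, intro allI)
    fix i
    have l0: "lams $ i \<ge> 0" using lams_nonneg by (simp add: less_eq_vec_def)
    have ri: "(G *v xs - \<xi> xs) $ i \<le> 0" using feas[of i] xs_eq by (simp add: r_def \<xi>s_def)
    show "pos_part (lams + \<eta> *\<^sub>R (G *v xs - \<xi> xs)) $ i = lams $ i"
    proof (cases "lams $ i = 0")
      case True
      then show ?thesis using ri eta_pos by (simp add: pos_part_def mult_nonneg_nonpos max_def)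
    next
      case False
      then have "(G *v xs - \<xi> xs) $ i = 0" using csl[of i] l0 xs_eq by (simp add: r_def \<xi>s_def)
      then show ?thesis using l0 by (simp add: pos_part_def)
    qed
  qed
  have Ld': "Ld = \<sigma>\<^sup>2 / \<gamma>" by (simp add: Ld_def \<sigma>_def)
  have gdLd: "\<gamma>d \<le> Ld"
  proof -
    obtain j :: 'w where True by simp
    have "lambda_min (G ** transpose G) * (norm (axis j (1::real)))\<^sup>2 \<le> (norm (transpose G *v axis j 1))\<^sup>2"
      by (rule lambda_min_bound)
    also have "\<dots> \<le> (\<sigma> * norm (axis j (1::real)))\<^sup>2" by (rule power_mono[OF GTb]) simp
    finally have lm: "lambda_min (G ** transpose G) \<le> \<sigma>\<^sup>2" by (simp add: norm_axis_1)
    show ?thesis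
    proof (cases "lambda_min (G ** transpose G) \<ge> 0")
      case True
      have "\<gamma>d \<le> \<sigma>\<^sup>2 / \<beta>x" unfolding \<gamma>d_def by (rule divide_right_mono[OF lm]) (use \<beta>0 in simp)
      also have "\<dots> \<le> \<sigma>\<^sup>2 / \<gamma>" by (rule divide_left_mono[OF \<beta>pos]) (use \<gamma>0 \<beta>0 in simp_all)
      finally show ?thesis by (simp add: Ld')
    next
      case False
      then have "\<gamma>d < 0" unfolding \<gamma>d_def using \<beta>0 by (simp add: divide_neg_pos)
      moreover have "Ld \<ge> 0" using \<gamma>0 by (simp add: Ld')
      ultimately show ?thesis by simp
    qed
  qed
  have step: "(norm (lam (Suc t) - lams))\<^sup>2 \<le> \<kappa>3 * (norm (lam t - lams))\<^sup>2 \<and>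
      (norm (lam (Suc t) - lams))\<^sup>2 \<le> (norm (lam t - lams))\<^sup>2 \<and> \<kappa>3 \<ge> 0" if t1: "t \<ge> 1" for t
  proof -
    have mx: "ismin (transpose G *v lam t) (x t)" by (rule lag_min[OF rda_x[OF t1]])
    have my: "ismin (transpose G *v lam t) (ybar t)" by (rule lag_min[OF rda_y[OF t1]])
    have xy: "x t = ybar t" by (rule min_unique[OF mx my])
    define \<Delta> where "\<Delta> = lam t - lams"
    define a where "a = ybar t - xs"
    define u where "u = G *v a"
    define e where "e = \<xi> (x t) - \<xi> xs"
    have M: "(lam t - lams) \<bullet> (G *v (ybar t - xs)) \<le> - (norm (transpose G *v (lam t - lams)))\<^sup>2 / \<beta>x"
      "\<gamma> * (norm (ybar t - xs))\<^sup>2 \<le> - ((lam t - lams) \<bullet> (G *v (ybar t - xs)))"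
      using conjunct1[OF mono[OF my xs_min]] conjunct2[OF mono[OF my xs_min]] by (simp_all only: kid) (simp_all only: GT_diff)
    have P1: "\<Delta> \<bullet> u \<le> - \<gamma>d * (norm \<Delta>)\<^sup>2"
    proof -
      have "lambda_min (G ** transpose G) * (norm \<Delta>)\<^sup>2 / \<beta>x \<le> (norm (transpose G *v \<Delta>))\<^sup>2 / \<beta>x"
        by (rule divide_right_mono[OF lambda_min_bound]) (use \<beta>0 in simp)
      moreover have "\<gamma>d * (norm \<Delta>)\<^sup>2 = lambda_min (G ** transpose G) * (norm \<Delta>)\<^sup>2 / \<beta>x"
        by (simp add: \<gamma>d_def)
      ultimately show ?thesis using M(1) unfolding \<Delta>_def u_def a_def by simp
    qed
    have P2: "\<gamma> * (norm a)\<^sup>2 \<le> - (\<Delta> \<bullet> u)" using M(2) unfolding \<Delta>_def u_def a_def .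
    have P3: "norm u \<le> \<sigma> * norm a" unfolding u_def by (rule Gb)
    have P4: "norm e \<le> \<epsilon>g * norm a" unfolding e_def a_def xy[symmetric] by (rule xi_lip)
    note ar = step_arith[OF P1 P2 P3 P4 norm_ge_zero \<gamma>0 \<sigma>0 eg0 eta_pos gdLd Ld'
        \<kappa>3_def[folded \<sigma>_def] cond1[folded \<sigma>_def] cond2[folded \<sigma>_def]]
    have veq: "lam (Suc t) - lams = pos_part (lam t + \<eta> *\<^sub>R (G *v ybar t - \<xi> (x t))) - pos_part (lams + \<eta> *\<^sub>R (G *v xs - \<xi> xs))"
      using rda_lam[OF t1] fixpt by simp
    have veq2: "(lam t + \<eta> *\<^sub>R (G *v ybar t - \<xi> (x t))) - (lams + \<eta> *\<^sub>R (G *v xs - \<xi> xs)) = \<Delta> + \<eta> *\<^sub>R u - \<eta> *\<^sub>R e"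
      unfolding \<Delta>_def u_def a_def e_def matrix_vector_mult_diff_distrib by (simp add: algebra_simps)
    have nle: "norm (lam (Suc t) - lams) \<le> norm (\<Delta> + \<eta> *\<^sub>R u - \<eta> *\<^sub>R e)"
      unfolding veq veq2[symmetric] by (rule pos_part_nonexp)
    have sq: "(norm (lam (Suc t) - lams))\<^sup>2 \<le> (norm (\<Delta> + \<eta> *\<^sub>R u - \<eta> *\<^sub>R e))\<^sup>2"
      by (rule power_mono[OF nle]) simp
    show ?thesis using sq ar(1) ar(2) ar(4) unfolding \<Delta>_def by linarith
  qed
  have k0: "\<kappa>3 \<ge> 0" using step[of 1] by simp
  have c1: "(norm (lam (Suc t) - lams))\<^sup>2 \<le> \<kappa>3 ^ t * (norm (lam 1 - lams))\<^sup>2" for t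
  proof (induction t)
    case 0 then show ?case by simp
  next
    case (Suc t)
    have "(norm (lam (Suc (Suc t)) - lams))\<^sup>2 \<le> \<kappa>3 * (norm (lam (Suc t) - lams))\<^sup>2" using step[of "Suc t"] by simp
    also have "\<dots> \<le> \<kappa>3 * (\<kappa>3 ^ t * (norm (lam 1 - lams))\<^sup>2)" by (rule mult_left_mono[OF Suc k0])
    finally show ?case by (simp add: mult.assoc)
  qed
  have c2: "(norm (x (Suc t) - xs))\<^sup>2 \<le> \<kappa>3 ^ (t - 1) * (\<sigma>\<^sup>2 / \<gamma>\<^sup>2) * (norm (lam 1 - lams))\<^sup>2" if t1: "t \<ge> 1" for t
  proof -
    have "Suc t \<ge> 1" by simp
    have "norm (x (Suc t) - xs) \<le> \<sigma> / \<gamma> * norm (lam (Suc t) - lams)"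
      by (rule min_lip[OF lag_min[OF rda_x[OF \<open>Suc t \<ge> 1\<close>]] xs_min])
    then have "(norm (x (Suc t) - xs))\<^sup>2 \<le> (\<sigma> / \<gamma> * norm (lam (Suc t) - lams))\<^sup>2"
      by (rule power_mono) simp
    also have "\<dots> = (\<sigma> / \<gamma>)\<^sup>2 * (norm (lam (Suc t) - lams))\<^sup>2" by (simp only: power_mult_distrib)
    also have "\<dots> \<le> (\<sigma> / \<gamma>)\<^sup>2 * (norm (lam t - lams))\<^sup>2"
      by (rule mult_left_mono) (use step[OF t1] in simp_all)
    also have "\<dots> \<le> (\<sigma> / \<gamma>)\<^sup>2 * (\<kappa>3 ^ (t - 1) * (norm (lam 1 - lams))\<^sup>2)"
    proof (rule mult_left_mono)
      show "(norm (lam t - lams))\<^sup>2 \<le> \<kappa>3 ^ (t - 1) * (norm (lam 1 - lams))\<^sup>2"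
        using c1[of "t - 1"] t1 by simp
    qed simp
    finally show ?thesis by (simp add: power_divide algebra_simps)
  qed
  show ?thesis using c1 c2 by (simp add: \<sigma>_def)
qed

end
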